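(* For $\ell=0,\dots,N$ and $v_h\in\mathcal V^h$ set $R_{\varepsilon,\ell}(v_h)=\big((I-Q_{\varepsilon,\ell})v_h,\,Q_{\varepsilon,\ell}v_h\big)_{1,k}$. Then $$(v_h,Q_\varepsilon v_h)_{1,k}=\sum_{\ell=0}^N\Big\{\Vert Q_{\varepsilon,\ell}v_h\Vert_{1,k}^2+R_{\varepsilon,\ell}(v_h)\Big\},$$ and $\vert R_{\varepsilon,\ell}(v_h)\vert\lesssim D_{\varepsilon,\ell}(v_h)+B_{\varepsilon,\ell}(v_h)$, where $$D_{\varepsilon,\ell}(v_h)=k^2\Vert(I-Q_{\varepsilon,\ell})v_h\Vert_{L^2(\Omega_\ell)}\Vert Q_{\varepsilon,\ell}v_h\Vert_{L^2(\Omega_\ell)},\quad B_{\varepsilon,\ell}(v_h)=k\Vert(I-Q_{\varepsilon,\ell})v_h\Vert_{L^2(\Gamma_\ell)}\Vert Q_{\varepsilon,\ell}v_h\Vert_{L^2(\Gamma_\ell)},$$ with $\Omega_0=\Omega$, $\Gamma_0=\Gamma$ and $\Gamma_\ell=\Gamma\cap\partial\Omega_\ell$ for $\ell=1,\dots,N$.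
   Context: $\Omega\subset\mathbb R^d$ ($d=2,3$) bounded Lipschitz polygonal/polyhedral domain, boundary $\Gamma$. $k>0$, $\varepsilon\in\mathbb R\setminus\{0\}$, $\eta\in\mathbb C$; $z=\sqrt{k^2+{\rm i}\varepsilon}$ (branch cut on positive real axis). Standing assumptions: $\vert\varepsilon\vert\lesssim k^2$, $\vert\eta\vert\lesssim k$, $\Re(\overline z\eta)\ge0$. $A\lesssim B$ means $A\le cB$ with $c$ independent of $k,\varepsilon,\eta$ and mesh/subdomain parameters. $a_\varepsilon(u,v)=\int_\Omega\nabla u\cdot\nabla\overline v-(k^2+{\rm i}\varepsilon)\int_\Omega u\overline v-{\rm i}\eta\int_\Gamma u\overline v$; $(v,w)_{1,k}=\int_\Omega\nabla v\cdot\nabla\overline w+k^2\int_\Omega v\overline w$, $\Vert v\Vert_{1,k}=(v,v)_{1,k}^{1/2}$. $\mathcal V^h$: continuous $P1$ functions on a conforming simplicial mesh. Subdomains $\Omega_\ell$, $\ell=1,\dots,N$, unions of fine elements forming an overlapping cover of $\overline\Omega$; $\mathcal V_\ell=\{v_h\in\mathcal V^h:\mathrm{supp}\,v_h\subset\overline\Omega_\ell\}$; $\mathcal V_0\subset\mathcal V^h$ the continuous $P1$ functions on a coarse simplicial mesh whose elements are unions of fine elements. $Q_{\varepsilon,\ell}:H^1(\Omega)\to\mathcal V_\ell$ ($\ell=0,\dots,N$) with $a_\varepsilon(Q_{\varepsilon,\ell}v,w)=a_\varepsilon(v,w)$ for all $w\in\mathcal V_\ell$; $Q_\varepsilon=\sum_{\ell=0}^NQ_{\varepsilon,\ell}$.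 *)

theory Defs
  imports "HOL-Analysis.Analysis" "HOL-Combinatorics.Permutations"
begin

definition lipschitz_domain :: "'a::euclidean_space set \<Rightarrow> bool" where
  "lipschitz_domain \<Omega> \<longleftrightarrow>
     (\<forall>x0 \<in> frontier \<Omega>. \<exists>r>0. \<exists>\<nu> L g. norm \<nu> = 1 \<and>
        L-lipschitz_on {y. y \<bullet> \<nu> = 0} (g :: 'a \<Rightarrow> real) \<and>
        \<Omega> \<inter> ball x0 r = {x \<in> ball x0 r. x \<bullet> \<nu> < g (x - (x \<bullet> \<nu>) *\<^sub>R \<nu>)})"

text \<open>A conforming simplicial mesh of the closure of Omega; each element is given by its vertex set
  (d+1 affinely independent points), the element itself being the convex hull.\<close>
definition simplicial_mesh :: "'a::euclidean_space set \<Rightarrow> 'a set set \<Rightarrow> bool" where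
  "simplicial_mesh \<Omega> \<T> \<longleftrightarrow>
     finite \<T> \<and>
     (\<forall>S\<in>\<T>. finite S \<and> card S = DIM('a) + 1 \<and> \<not> affine_dependent S) \<and>
     (\<forall>S\<in>\<T>. \<forall>S'\<in>\<T>. convex hull S \<inter> convex hull S' = convex hull (S \<inter> S')) \<and>
     (\<Union>S\<in>\<T>. convex hull S) = closure \<Omega>"

definition P1_space :: "'a::euclidean_space set \<Rightarrow> 'a set set \<Rightarrow> ('a \<Rightarrow> complex) set" where
  "P1_space \<Omega> \<T> =
     {v. continuous_on (closure \<Omega>) v \<and> (\<forall>x. x \<notin> closure \<Omega> \<longrightarrow> v x = 0) \<and>
         (\<forall>S\<in>\<T>. \<exists>L c. linear (L :: 'a \<Rightarrow> complex) \<and> (\<forall>x \<in> convex hull S. v x = L x + c))}"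

definition supp :: "('a::topological_space \<Rightarrow> complex) \<Rightarrow> 'a set" where
  "supp v = closure {x. v x \<noteq> 0}"

definition grad_form :: "'a::euclidean_space set \<Rightarrow> ('a \<Rightarrow> complex) \<Rightarrow> ('a \<Rightarrow> complex) \<Rightarrow> complex" where
  "grad_form S u w = (LINT x:S|lebesgue.
      (\<Sum>b\<in>Basis. frechet_derivative u (at x) b * cnj (frechet_derivative w (at x) b)))"

definition L2_form :: "'a::euclidean_space set \<Rightarrow> ('a \<Rightarrow> complex) \<Rightarrow> ('a \<Rightarrow> complex) \<Rightarrow> complex" where
  "L2_form S u w = (LINT x:S|lebesgue. u x * cnj (w x))"

definition L2_norm_on :: "'a::euclidean_space set \<Rightarrow> ('a \<Rightarrow> complex) \<Rightarrow> real" where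
  "L2_norm_on S v = sqrt (LINT x:S|lebesgue. (cmod (v x))\<^sup>2)"

definition det_nat :: "nat \<Rightarrow> (nat \<Rightarrow> nat \<Rightarrow> real) \<Rightarrow> real" where
  "det_nat m G = (\<Sum>\<pi> | \<pi> permutes {..<m}. of_int (sign \<pi>) * (\<Prod>i<m. G i (\<pi> i)))"

definition std_simplex :: "nat \<Rightarrow> (nat \<Rightarrow> real) set" where
  "std_simplex m = {t \<in> PiE {..<m} (\<lambda>_. UNIV). (\<forall>i<m. 0 \<le> t i) \<and> (\<Sum>i<m. t i) \<le> 1}"

text \<open>Integral over a flat simplex with vertex set F (surface measure of its affine hull),
  computed via an affine parametrisation over the standard simplex with Gram-determinant Jacobian.\<close>
definition simplex_integral ::
  "'a::euclidean_space set \<Rightarrow> ('a \<Rightarrow> 'b::{banach,second_countable_topology}) \<Rightarrow> 'b" where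
  "simplex_integral F f =
     (let m = card F - 1;
          p = (SOME p. bij_betw p {..<card F} F);
          e = (\<lambda>i. p (Suc i) - p 0);
          J = sqrt (det_nat m (\<lambda>i j. e i \<bullet> e j))
      in J *\<^sub>R (LINT t:std_simplex m | PiM {..<m} (\<lambda>_. lborel). f (p 0 + (\<Sum>i<m. t i *\<^sub>R e i))))"

definition boundary_facets :: "'a::euclidean_space set \<Rightarrow> 'a set set \<Rightarrow> 'a set set" where
  "boundary_facets \<Omega> \<T> =
     {F. \<exists>S\<in>\<T>. F \<subseteq> S \<and> card F = DIM('a) \<and> convex hull F \<subseteq> frontier \<Omega>}"

definition bdry_integral ::
  "'a::euclidean_space set \<Rightarrow> 'a set set \<Rightarrow> 'a set \<Rightarrow> ('a \<Rightarrow> 'b::{banach,second_countable_topology}) \<Rightarrow> 'b" where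
  "bdry_integral \<Omega> \<T> G f = (\<Sum>F\<in>boundary_facets \<Omega> \<T>. simplex_integral F (\<lambda>x. indicator G x *\<^sub>R f x))"

definition bdry_norm_on :: "'a::euclidean_space set \<Rightarrow> 'a set set \<Rightarrow> 'a set \<Rightarrow> ('a \<Rightarrow> complex) \<Rightarrow> real" where
  "bdry_norm_on \<Omega> \<T> G v = sqrt (bdry_integral \<Omega> \<T> G (\<lambda>x. (cmod (v x))\<^sup>2))"

text \<open>z = sqrt(k^2 + i eps) with branch cut on the positive real axis, i.e. Im z > 0.\<close>
definition helm_z :: "real \<Rightarrow> real \<Rightarrow> complex" where
  "helm_z k \<epsilon> = (let s = csqrt (complex_of_real (k\<^sup>2) + \<i> * complex_of_real \<epsilon>)
                  in if Im s > 0 then s else - s)"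

definition a_eps :: "'a::euclidean_space set \<Rightarrow> 'a set set \<Rightarrow> real \<Rightarrow> real \<Rightarrow> complex
                      \<Rightarrow> ('a \<Rightarrow> complex) \<Rightarrow> ('a \<Rightarrow> complex) \<Rightarrow> complex" where
  "a_eps \<Omega> \<T> k \<epsilon> \<eta> u w =
     grad_form \<Omega> u w - (complex_of_real (k\<^sup>2) + \<i> * complex_of_real \<epsilon>) * L2_form \<Omega> u w
     - \<i> * \<eta> * bdry_integral \<Omega> \<T> (frontier \<Omega>) (\<lambda>x. u x * cnj (w x))"

definition ip1k :: "'a::euclidean_space set \<Rightarrow> real \<Rightarrow> ('a \<Rightarrow> complex) \<Rightarrow> ('a \<Rightarrow> complex) \<Rightarrow> complex" where
  "ip1k \<Omega> k u w = grad_form \<Omega> u w + complex_of_real (k\<^sup>2) * L2_form \<Omega> u w"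

definition norm1k :: "'a::euclidean_space set \<Rightarrow> real \<Rightarrow> ('a \<Rightarrow> complex) \<Rightarrow> real" where
  "norm1k \<Omega> k v = sqrt (Re (ip1k \<Omega> k v v))"

end

theory Submission
  imports Defs
begin

lemma P1_borel:
  assumes "u \<in> P1_space \<Omega> T"
  shows "u \<in> borel_measurable borel"
proof -
  have c: "continuous_on (closure \<Omega>) u" and z: "\<And>x. x \<notin> closure \<Omega> \<Longrightarrow> u x = 0"
    using assms by (auto simp: P1_space_def)
  have "(\<lambda>x. indicator (closure \<Omega>) x *\<^sub>R u x) \<in> borel_measurable borel"
    by (rule borel_measurable_continuous_on_indicator) (auto simp: c)
  moreover have "(\<lambda>x. indicator (closure \<Omega>) x *\<^sub>R u x) = u"
    using z by (auto simp: indicator_def)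
  ultimately show ?thesis by simp
qed

lemma P1_bounded:
  assumes "u \<in> P1_space \<Omega> T" "bounded \<Omega>"
  shows "\<exists>B. \<forall>x. cmod (u x) \<le> B"
proof -
  have c: "continuous_on (closure \<Omega>) u" and z: "\<And>x. x \<notin> closure \<Omega> \<Longrightarrow> u x = 0"
    using assms by (auto simp: P1_space_def)
  have "compact (u ` closure \<Omega>)"
    using assms(2) c by (intro compact_continuous_image) (auto simp: compact_closure)
  then obtain B where B: "\<And>y. y \<in> u ` closure \<Omega> \<Longrightarrow> norm y \<le> B"
    using compact_imp_bounded bounded_iff by metis
  show ?thesis
  proof (intro exI allI)
    fix x show "cmod (u x) \<le> max B 0"
      using B[of "u x"] z[of x] by (cases "x \<in> closure \<Omega>") auto
  qed
qed

lemma P1_deriv: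
  fixes \<Omega> :: "'a::euclidean_space set"
  assumes "u \<in> P1_space \<Omega> T" "simplicial_mesh \<Omega> T"
  shows "\<exists>N\<in>null_sets lebesgue. \<exists>B. \<forall>x\<in>\<Omega> - N. \<exists>D. (u has_derivative D) (at x) \<and> (\<forall>b\<in>Basis. cmod (D b) \<le> B)"
proof -
  have fin: "finite T" and cov: "(\<Union>S\<in>T. convex hull S) = closure \<Omega>"
    and fS: "\<And>S. S \<in> T \<Longrightarrow> finite S"
    using assms(2) by (auto simp: simplicial_mesh_def)
  have "\<forall>S\<in>T. \<exists>L c. linear (L :: 'a \<Rightarrow> complex) \<and> (\<forall>x \<in> convex hull S. u x = L x + c)"
    using assms(1) by (auto simp: P1_space_def)
  then obtain Lf cf where Lf: "\<And>S. S \<in> T \<Longrightarrow> linear (Lf S) \<and> (\<forall>x \<in> convex hull S. u x = Lf S x + cf S)"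
    by metis
  define N where "N = (\<Union>S\<in>T. frontier (convex hull S))"
  have "N \<in> null_sets lebesgue"
    unfolding N_def using fin
    by (intro null_sets.finite_UN) (auto simp: negligible_iff_null_sets[symmetric] intro!: negligible_convex_frontier)
  moreover have "\<forall>x\<in>\<Omega> - N. \<exists>D. (u has_derivative D) (at x) \<and> (\<forall>b\<in>Basis. cmod (D b) \<le> (\<Sum>S\<in>T. \<Sum>b'\<in>Basis. cmod (Lf S b')))"
  proof
    fix x assume x: "x \<in> \<Omega> - N"
    then have "x \<in> closure \<Omega>" using closure_subset by blast
    then obtain S where S: "S \<in> T" "x \<in> convex hull S" using cov by blast
    have "closed (convex hull S)" using fS[OF S(1)]
      by (simp add: compact_imp_closed finite_imp_compact_convex_hull)
    then have xi: "x \<in> interior (convex hull S)" using S x unfolding N_def frontier_def by auto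
    have lin: "linear (Lf S)" using Lf S by auto
    have "((\<lambda>y. Lf S y + cf S) has_derivative Lf S) (at x)"
      using lin by (auto intro!: derivative_eq_intros bounded_linear_imp_has_derivative simp: linear_conv_bounded_linear)
    then have d: "(u has_derivative Lf S) (at x)"
      by (rule has_derivative_transform_within_open[OF _ open_interior xi])
         (use Lf[OF S(1)] interior_subset in force)
    have "\<forall>b\<in>Basis. cmod (Lf S b) \<le> (\<Sum>S\<in>T. \<Sum>b'\<in>Basis. cmod (Lf S b'))"
    proof
      fix b :: 'a assume b: "b \<in> Basis"
      have "cmod (Lf S b) \<le> (\<Sum>b'\<in>Basis. cmod (Lf S b'))"
        using b by (intro member_le_sum) auto
      also have "\<dots> \<le> (\<Sum>S\<in>T. \<Sum>b'\<in>Basis. cmod (Lf S b'))"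
        using S(1) fin by (intro member_le_sum) (auto intro: sum_nonneg)
      finally show "cmod (Lf S b) \<le> (\<Sum>S\<in>T. \<Sum>b'\<in>Basis. cmod (Lf S b'))" .
    qed
    then show "\<exists>D. (u has_derivative D) (at x) \<and> (\<forall>b\<in>Basis. cmod (D b) \<le> (\<Sum>S\<in>T. \<Sum>b'\<in>Basis. cmod (Lf S b')))"
      using d by blast
  qed
  ultimately show ?thesis by blast
qed

lemma deriv_seq:
  fixes u :: "'a::euclidean_space \<Rightarrow> complex"
  assumes d: "(u has_derivative D) (at x)" and b: "norm b = 1"
  shows "(\<lambda>n. (u (x + (1 / real (Suc n)) *\<^sub>R b) - u x) * of_real (real (Suc n))) \<longlonglongrightarrow> D b"
proof -
  have bl: "bounded_linear D" and lim: "((\<lambda>h. norm (u (x + h) - u x - D h) / norm h) \<longlongrightarrow> 0) (at 0)"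
    using d by (auto simp: has_derivative_at)
  define h where "h n = (1 / real (Suc n)) *\<^sub>R b" for n
  have h0: "h \<longlonglongrightarrow> 0"
  proof -
    have "(\<lambda>n. 1 / real (Suc n)) \<longlonglongrightarrow> 0"
      using LIMSEQ_Suc[OF lim_const_over_n[of 1]] by simp
    then show ?thesis unfolding h_def using tendsto_scaleR[OF _ tendsto_const, of _ 0 _ b] by simp
  qed
  have hn: "h n \<noteq> 0" for n
    using b by (auto simp: h_def)
  have "filterlim h (at 0) sequentially"
    using h0 hn by (intro filterlim_atI) (auto intro: always_eventually)
  then have "((\<lambda>n. norm (u (x + h n) - u x - D (h n)) / norm (h n)) \<longlongrightarrow> 0) sequentially"
    by (rule filterlim_compose[OF lim])
  moreover have E: "norm (u (x + h n) - u x - D (h n)) / norm (h n)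
      = norm ((u (x + h n) - u x) * of_real (real (Suc n)) - D b)" for n
  proof -
    have Dh: "D (h n) = of_real (1 / real (Suc n)) * D b"
      unfolding h_def using linear_scale[OF bounded_linear.linear[OF bl]] by (simp add: scaleR_conv_of_real)
    have nh: "norm (h n) = 1 / real (Suc n)" using b by (simp add: h_def)
    have "(u (x + h n) - u x) * of_real (real (Suc n)) - D b
        = (u (x + h n) - u x - D (h n)) * of_real (real (Suc n))"
    proof -
      have e: "of_real (1/real(Suc n)) * of_real (real (Suc n)) = (1::complex)"
      proof -
        have "(1/real(Suc n)) * real (Suc n) = 1" by simp
        then show ?thesis by (metis of_real_mult of_real_1)
      qed
      have "(u (x + h n) - u x - D (h n)) * of_real (real (Suc n))
          = (u (x + h n) - u x) * of_real (real (Suc n)) - D b * (of_real (1/real(Suc n)) * of_real (real (Suc n)))"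
        unfolding Dh by (simp only: left_diff_distrib right_diff_distrib mult_ac)
      then show ?thesis using e by simp
    qed
    then have "norm ((u (x + h n) - u x) * of_real (real (Suc n)) - D b)
        = norm (u (x + h n) - u x - D (h n)) * \<bar>real (Suc n)\<bar>"
      by (simp only: norm_mult norm_of_real)
    then show ?thesis by (simp add: nh)
  qed
  ultimately have "((\<lambda>n. norm ((u (x + h n) - u x) * of_real (real (Suc n)) - D b)) \<longlongrightarrow> 0) sequentially"
    by (simp only: E)
  then have "((\<lambda>n. (u (x + h n) - u x) * of_real (real (Suc n)) - D b) \<longlongrightarrow> 0) sequentially"
    by (rule tendsto_norm_zero_cancel)
  then have "(\<lambda>n. (u (x + h n) - u x) * of_real (real (Suc n))) \<longlonglongrightarrow> D b"
    by (simp only: Lim_null[symmetric])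
  then show ?thesis unfolding h_def .
qed

lemma std_simplex_sets: "std_simplex m \<in> sets (PiM {..<m} (\<lambda>_. lborel))"
proof -
  have "std_simplex m = {t \<in> space (PiM {..<m} (\<lambda>_. lborel)). (\<forall>i\<in>{..<m}. 0 \<le> t i) \<and> (\<Sum>i<m. t i) \<le> 1}"
    by (auto simp: std_simplex_def space_PiM)
  also have "\<dots> \<in> sets (PiM {..<m} (\<lambda>_. lborel))"
    by measurable
  finally show ?thesis .
qed

lemma std_simplex_finite: "emeasure (PiM {..<m} (\<lambda>_. lborel)) (std_simplex m) < \<infinity>"
proof -
  interpret product_sigma_finite "\<lambda>_. lborel" by standard
  have sub: "std_simplex m \<subseteq> PiE {..<m} (\<lambda>_. {0..1::real})"
  proof
    fix t assume t: "t \<in> std_simplex m"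
    have "t i \<le> 1" if "i < m" for i
    proof -
      have "t i \<le> (\<Sum>j<m. t j)"
        using t that by (intro member_le_sum) (auto simp: std_simplex_def)
      then show ?thesis using t by (auto simp: std_simplex_def)
    qed
    then show "t \<in> PiE {..<m} (\<lambda>_. {0..1::real})"
      using t by (auto simp: std_simplex_def PiE_def Pi_def)
  qed
  have "emeasure (PiM {..<m} (\<lambda>_. lborel)) (std_simplex m)
      \<le> emeasure (PiM {..<m} (\<lambda>_. lborel)) (PiE {..<m} (\<lambda>_. {0..1::real}))"
    by (rule emeasure_mono[OF sub]) (auto intro!: sets_PiM_I_finite)
  also have "\<dots> = 1"
    by (subst emeasure_PiM) auto
  finally show ?thesis by (simp add: order_le_less_trans)
qed

lemma affine_meas:
  fixes p0 :: "'a::euclidean_space"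
  shows "(\<lambda>t. p0 + (\<Sum>i<m. t i *\<^sub>R e i)) \<in> borel_measurable (PiM {..<m} (\<lambda>_. lborel))"
  by measurable

lemma si_integrable:
  fixes f :: "'a::euclidean_space \<Rightarrow> 'b::{banach,second_countable_topology}"
  assumes f: "f \<in> borel_measurable borel" and B: "\<And>x. norm (f x) \<le> B"
  shows "integrable (PiM {..<m} (\<lambda>_. lborel)) (\<lambda>t. indicator (std_simplex m) t *\<^sub>R f (p0 + (\<Sum>i<m. t i *\<^sub>R e i)))"
proof (rule integrableI_bounded_set[where A="std_simplex m" and B=B])
  show "std_simplex m \<in> sets (PiM {..<m} (\<lambda>_. lborel))" by (rule std_simplex_sets)
  show "emeasure (PiM {..<m} (\<lambda>_. lborel)) (std_simplex m) < \<infinity>" by (rule std_simplex_finite)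
  have "(\<lambda>t. f (p0 + (\<Sum>i<m. t i *\<^sub>R e i))) \<in> borel_measurable (PiM {..<m} (\<lambda>_. lborel))"
    using measurable_comp[OF affine_meas f] by (simp add: comp_def)
  then show "(\<lambda>t. indicator (std_simplex m) t *\<^sub>R f (p0 + (\<Sum>i<m. t i *\<^sub>R e i))) \<in> borel_measurable (PiM {..<m} (\<lambda>_. lborel))"
    using std_simplex_sets by measurable
qed (use B in \<open>auto simp: indicator_def\<close>)

definition bb :: "('a::euclidean_space \<Rightarrow> 'b::{banach,second_countable_topology}) \<Rightarrow> bool" where
  "bb f \<longleftrightarrow> f \<in> borel_measurable borel \<and> (\<exists>B. \<forall>x. norm (f x) \<le> B)"

lemma si_integrable':
  assumes "bb f"
  shows "integrable (PiM {..<m} (\<lambda>_. lborel)) (\<lambda>t. indicator (std_simplex m) t *\<^sub>R f (p0 + (\<Sum>i<m. t i *\<^sub>R e i)))"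
  using assms si_integrable unfolding bb_def by blast

definition "sm F = card F - 1"
definition "sp F = (SOME p. bij_betw p {..<card F} F)"
definition "sphi F t = sp F 0 + (\<Sum>i<sm F. t i *\<^sub>R (sp F (Suc i) - sp F 0))"
definition "sJ F = sqrt (det_nat (sm F) (\<lambda>i j. (sp F (Suc i) - sp F 0) \<bullet> (sp F (Suc j) - sp F 0)))"

lemma si_eq: "simplex_integral F f = sJ F *\<^sub>R integral\<^sup>L (PiM {..<sm F} (\<lambda>_. lborel)) (\<lambda>t. indicator (std_simplex (sm F)) t *\<^sub>R f (sphi F t))"
  unfolding simplex_integral_def Let_def set_lebesgue_integral_def sm_def sp_def sphi_def sJ_def ..

lemma det_nat_1: "det_nat 1 G = G 0 0"
  unfolding det_nat_def by (simp add: lessThan_Suc)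

lemma det_nat_2: "det_nat 2 G = G 0 0 * G 1 1 - G 0 1 * G 1 0"
proof -
  have e: "{..<2::nat} = insert 0 {1}" by auto
  show ?thesis
    unfolding det_nat_def e
    by (simp add: sum_over_permutations_insert sign_swap_id lessThan_Suc transpose_def)
qed

lemma sJ_nonneg:
  assumes "sm F = 1 \<or> sm F = 2"
  shows "0 \<le> sJ F"
proof -
  define a where "a = sp F (Suc 0) - sp F 0"
  define b where "b = sp F (Suc 1) - sp F 0"
  have "0 \<le> det_nat (sm F) (\<lambda>i j. (sp F (Suc i) - sp F 0) \<bullet> (sp F (Suc j) - sp F 0))"
    using assms
  proof
    assume "sm F = 1" then show ?thesis by (simp only: det_nat_1) simp
  next
    assume "sm F = 2"
    moreover have "(a \<bullet> b) * (b \<bullet> a) \<le> (a \<bullet> a) * (b \<bullet> b)"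
    proof -
      have "\<bar>a \<bullet> b\<bar> \<le> norm a * norm b" by (rule Cauchy_Schwarz_ineq2)
      then have "\<bar>a \<bullet> b\<bar>^2 \<le> (norm a * norm b)^2"
        by (intro power_mono) auto
      then show ?thesis by (simp add: inner_commute power_mult_distrib power2_norm_eq_inner[symmetric] power2_eq_square[symmetric])
    qed
    ultimately show ?thesis by (simp only: det_nat_2) (simp add: a_def b_def)
  qed
  then show ?thesis by (simp add: sJ_def)
qed

lemma si_int:
  assumes "bb f"
  shows "integrable (PiM {..<sm F} (\<lambda>_. lborel)) (\<lambda>t. indicator (std_simplex (sm F)) t *\<^sub>R f (sphi F t))"
  unfolding sphi_def by (rule si_integrable'[OF assms])

lemma si_add:
  assumes "bb f" "bb g"
  shows "simplex_integral F (\<lambda>x. f x + g x) = simplex_integral F f + simplex_integral F g"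
  unfolding si_eq
  by (simp only: scaleR_add_right Bochner_Integration.integral_add[OF si_int[OF assms(1)] si_int[OF assms(2)]])

lemma si_diff:
  assumes "bb f" "bb g"
  shows "simplex_integral F (\<lambda>x. f x - g x) = simplex_integral F f - simplex_integral F g"
  unfolding si_eq
  by (simp only: scaleR_diff_right Bochner_Integration.integral_diff[OF si_int[OF assms(1)] si_int[OF assms(2)]])

lemma si_scale:
  "simplex_integral F (\<lambda>x. c *\<^sub>R f x) = c *\<^sub>R simplex_integral F f"
proof -
  have "integral\<^sup>L (PiM {..<sm F} (\<lambda>_. lborel)) (\<lambda>t. indicator (std_simplex (sm F)) t *\<^sub>R c *\<^sub>R f (sphi F t))
     = c *\<^sub>R integral\<^sup>L (PiM {..<sm F} (\<lambda>_. lborel)) (\<lambda>t. indicator (std_simplex (sm F)) t *\<^sub>R f (sphi F t))"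
    by (simp only: scaleR_left_commute[of _ c] integral_scaleR_right)
  then show ?thesis unfolding si_eq by (simp only: scaleR_left_commute[of _ c])
qed

lemma si_zero: "simplex_integral F (\<lambda>x. 0) = 0"
  unfolding si_eq by simp

lemma si_mono:
  fixes f g :: "'a::euclidean_space \<Rightarrow> real"
  assumes "bb f" "bb g" "\<And>x. f x \<le> g x" and J: "0 \<le> sJ F"
  shows "simplex_integral F f \<le> simplex_integral F g"
  unfolding si_eq
  by (intro scaleR_left_mono integral_mono si_int[OF assms(1)] si_int[OF assms(2)] J)
     (auto simp: indicator_def assms(3))

lemma si_nonneg:
  fixes f :: "'a::euclidean_space \<Rightarrow> real"
  assumes "\<And>x. 0 \<le> f x" and J: "0 \<le> sJ F"
  shows "0 \<le> simplex_integral F f"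
  unfolding si_eq
  by (intro scaleR_nonneg_nonneg integral_nonneg J) (auto simp: indicator_def assms)

lemma si_norm:
  fixes f :: "'a::euclidean_space \<Rightarrow> 'b::{banach,second_countable_topology}"
  assumes J: "0 \<le> sJ F"
  shows "norm (simplex_integral F f) \<le> simplex_integral F (\<lambda>x. norm (f x))"
  unfolding si_eq
proof -
  have *: "norm (integral\<^sup>L M (\<lambda>t. indicator A t *\<^sub>R f (\<phi> t))) \<le> integral\<^sup>L M (\<lambda>t. indicator A t * norm (f (\<phi> t)))"
    for M A \<phi>
  proof -
    have "norm (integral\<^sup>L M (\<lambda>t. indicator A t *\<^sub>R f (\<phi> t))) \<le> integral\<^sup>L M (\<lambda>t. norm (indicator A t *\<^sub>R f (\<phi> t)))"
      by (rule integral_norm_bound)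
    also have "(\<lambda>t. norm (indicator A t *\<^sub>R f (\<phi> t))) = (\<lambda>t. indicator A t * norm (f (\<phi> t)))"
      by (auto simp: indicator_def)
    finally show ?thesis .
  qed
  show "norm (sJ F *\<^sub>R integral\<^sup>L (PiM {..<sm F} (\<lambda>_. lborel)) (\<lambda>t. indicator (std_simplex (sm F)) t *\<^sub>R f (sphi F t)))
    \<le> sJ F *\<^sub>R integral\<^sup>L (PiM {..<sm F} (\<lambda>_. lborel)) (\<lambda>t. indicator (std_simplex (sm F)) t *\<^sub>R norm (f (sphi F t)))"
    unfolding norm_scaleR abs_of_nonneg[OF J] real_scaleR_def by (intro mult_left_mono * J)
qed

lemma borel_measurable_cnj[measurable (raw)]:
  assumes "f \<in> borel_measurable M"
  shows "(\<lambda>x. cnj (f x :: complex)) \<in> borel_measurable M"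
proof -
  have "cnj \<in> borel_measurable borel"
    by (intro borel_measurable_continuous_onI continuous_intros)
  from measurable_comp[OF assms this] show ?thesis by (simp add: comp_def)
qed

lemma bb_diff: "bb f \<Longrightarrow> bb g \<Longrightarrow> bb (\<lambda>x. f x - g x)"
  unfolding bb_def
proof (elim conjE exE, intro conjI)
  fix B1 B2 assume "f \<in> borel_measurable borel" "g \<in> borel_measurable borel"
    "\<forall>x. norm (f x) \<le> B1" "\<forall>x. norm (g x) \<le> B2"
  then show "(\<lambda>x. f x - g x) \<in> borel_measurable borel" "\<exists>B. \<forall>x. norm (f x - g x) \<le> B"
    by (auto intro!: exI[of _ "B1 + B2"] norm_triangle_le_diff add_mono)
qed

lemma bb_add: "bb f \<Longrightarrow> bb g \<Longrightarrow> bb (\<lambda>x. f x + g x)"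
  unfolding bb_def
proof (elim conjE exE, intro conjI)
  fix B1 B2 assume "f \<in> borel_measurable borel" "g \<in> borel_measurable borel"
    "\<forall>x. norm (f x) \<le> B1" "\<forall>x. norm (g x) \<le> B2"
  then show "(\<lambda>x. f x + g x) \<in> borel_measurable borel" "\<exists>B. \<forall>x. norm (f x + g x) \<le> B"
    by (auto intro!: exI[of _ "B1 + B2"] norm_triangle_le add_mono)
qed

lemma bb_scale: "bb f \<Longrightarrow> bb (\<lambda>x. c *\<^sub>R f x)"
  unfolding bb_def
proof (elim conjE exE, intro conjI)
  fix B1 assume "f \<in> borel_measurable borel" "\<forall>x. norm (f x) \<le> B1"
  then show "(\<lambda>x. c *\<^sub>R f x) \<in> borel_measurable borel" "\<exists>B. \<forall>x. norm (c *\<^sub>R f x) \<le> B"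
    by (auto intro!: exI[of _ "\<bar>c\<bar> * B1"] mult_left_mono)
qed

lemma bb_ind: "G \<in> sets borel \<Longrightarrow> bb f \<Longrightarrow> bb (\<lambda>x. indicator G x *\<^sub>R f x)"
  unfolding bb_def
proof (elim conjE exE, intro conjI)
  fix B1 assume "G \<in> sets borel" "f \<in> borel_measurable borel" "\<forall>x. norm (f x) \<le> B1"
  then show "(\<lambda>x. indicator G x *\<^sub>R f x) \<in> borel_measurable borel" "\<exists>B. \<forall>x. norm (indicator G x *\<^sub>R f x) \<le> B"
    by (auto intro!: exI[of _ "\<bar>B1\<bar>"] simp: indicator_def intro: order_trans[OF _ abs_ge_self])
qed

lemma bb_mult: 
  fixes u w :: "'a::euclidean_space \<Rightarrow> complex"
  shows "bb u \<Longrightarrow> bb w \<Longrightarrow> bb (\<lambda>x. u x * cnj (w x))"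
  unfolding bb_def
proof (elim conjE exE, intro conjI)
  fix B1 B2 assume "u \<in> borel_measurable borel" "w \<in> borel_measurable borel"
    "\<forall>x. norm (u x) \<le> B1" "\<forall>x. norm (w x) \<le> B2"
  moreover have "0 \<le> B1" using \<open>\<forall>x. norm (u x) \<le> B1\<close> norm_ge_zero order_trans by metis
  ultimately show "(\<lambda>x. u x * cnj (w x)) \<in> borel_measurable borel" "\<exists>B. \<forall>x. norm (u x * cnj (w x)) \<le> B"
    by (auto intro!: exI[of _ "B1 * B2"] mult_mono simp: norm_mult)
qed

lemma bb_normmult:
  fixes u w :: "'a::euclidean_space \<Rightarrow> complex"
  shows "bb u \<Longrightarrow> bb w \<Longrightarrow> bb (\<lambda>x. cmod (u x) * cmod (w x))"
  unfolding bb_def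
proof (elim conjE exE, intro conjI)
  fix B1 B2 assume "u \<in> borel_measurable borel" "w \<in> borel_measurable borel"
    "\<forall>x. norm (u x) \<le> B1" "\<forall>x. norm (w x) \<le> B2"
  moreover have "0 \<le> B1" using \<open>\<forall>x. norm (u x) \<le> B1\<close> norm_ge_zero order_trans by metis
  ultimately show "(\<lambda>x. cmod (u x) * cmod (w x)) \<in> borel_measurable borel" "\<exists>B. \<forall>x. norm (cmod (u x) * cmod (w x)) \<le> B"
    by (auto intro!: exI[of _ "B1 * B2"] mult_mono simp: norm_mult)
qed

lemma bb_sq:
  fixes u :: "'a::euclidean_space \<Rightarrow> complex"
  shows "bb u \<Longrightarrow> bb (\<lambda>x. (cmod (u x))\<^sup>2)"
  using bb_normmult[of u u] by (simp add: power2_eq_square)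

lemma cs_abstract:
  fixes A B X :: real
  assumes A: "0 \<le> A" and B: "0 \<le> B" and H: "\<And>t. t > 0 \<Longrightarrow> 2 * X \<le> t * A + B / t"
  shows "X \<le> sqrt A * sqrt B"
proof (cases "A > 0 \<and> B > 0")
  case True
  define t where "t = sqrt B / sqrt A"
  have tp: "t > 0" using True by (simp add: t_def)
  have "t * A = sqrt A * sqrt B" using True
    by (simp add: t_def field_simps, (metis real_sqrt_pow2 less_imp_le power2_eq_square)?)
  moreover have "B / t = sqrt A * sqrt B" using True
    by (simp add: t_def field_simps, (metis real_sqrt_pow2 less_imp_le power2_eq_square)?)
  ultimately show ?thesis using H[OF tp] by simp
next
  case False
  then have "A = 0 \<or> B = 0" using A B by auto
  show ?thesis
  proof (rule ccontr)
    assume "\<not> X \<le> sqrt A * sqrt B"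
    then have X: "X > 0" using \<open>A = 0 \<or> B = 0\<close> by auto
    show False using \<open>A = 0 \<or> B = 0\<close>
    proof
      assume A0: "A = 0"
      define t where "t = (B + 1) / X"
      have tp: "t > 0" using X B by (simp add: t_def)
      have "B / t = B * X / (B + 1)" using X B by (simp add: t_def field_simps)
      also have "\<dots> < X" using X B by (simp add: field_simps)
      finally show False using H[OF tp] A0 X by simp
    next
      assume B0: "B = 0"
      define t where "t = X / (A + 1)"
      have tp: "t > 0" using X A by (simp add: t_def)
      have "t * A < X" using X A by (simp add: t_def field_simps)
      then show False using H[OF tp] B0 X by simp
    qed
  qed
qed

lemma bb_lebesgue: "f \<in> borel_measurable borel \<Longrightarrow> f \<in> borel_measurable lebesgue"
  by (rule measurable_completion) (simp add: measurable_lborel1)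

lemma leb_int:
  fixes f :: "'a::euclidean_space \<Rightarrow> 'b::{banach,second_countable_topology}"
  assumes "bb f" "S \<in> sets lebesgue" "bounded S"
  shows "integrable lebesgue (\<lambda>x. indicator S x *\<^sub>R f x)"
proof -
  obtain B where B: "\<And>x. norm (f x) \<le> B" and m: "f \<in> borel_measurable borel"
    using assms(1) unfolding bb_def by blast
  have fm: "S \<in> lmeasurable" using assms bounded_set_imp_lmeasurable by blast
  show ?thesis
  proof (rule integrableI_bounded_set[where A=S and B=B])
    show "S \<in> sets lebesgue" by fact
    show "emeasure lebesgue S < \<infinity>" using fm unfolding fmeasurable_def by blast
    show "(\<lambda>x. indicator S x *\<^sub>R f x) \<in> borel_measurable lebesgue"
      using bb_lebesgue[OF m] assms(2) by measurable
  qed (auto simp: B indicator_def)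
qed

lemma L2_cs:
  fixes u w :: "'a::euclidean_space \<Rightarrow> complex"
  assumes u: "bb u" and w: "bb w" and S: "S \<in> sets lebesgue" "bounded S"
  shows "cmod (L2_form S u w) \<le> L2_norm_on S u * L2_norm_on S w"
proof -
  define I where "I f = integral\<^sup>L lebesgue (\<lambda>x. indicator S x *\<^sub>R f x)" for f :: "'a \<Rightarrow> real"
  have int: "bb f \<Longrightarrow> integrable lebesgue (\<lambda>x. indicator S x *\<^sub>R f x)" for f :: "'a \<Rightarrow> real"
    using leb_int S by blast
  define X where "X = I (\<lambda>x. cmod (u x) * cmod (w x))"
  define A where "A = I (\<lambda>x. (cmod (u x))\<^sup>2)"
  define B where "B = I (\<lambda>x. (cmod (w x))\<^sup>2)"
  have "cmod (L2_form S u w) \<le> integral\<^sup>L lebesgue (\<lambda>x. norm (indicator S x *\<^sub>R (u x * cnj (w x))))"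
    unfolding L2_form_def set_lebesgue_integral_def by (rule integral_norm_bound)
  also have "(\<lambda>x. norm (indicator S x *\<^sub>R (u x * cnj (w x)))) = (\<lambda>x. indicator S x *\<^sub>R (cmod (u x) * cmod (w x)))"
    by (auto simp: indicator_def norm_mult)
  finally have 1: "cmod (L2_form S u w) \<le> X" unfolding X_def I_def .
  have A0: "0 \<le> A" unfolding A_def I_def by (intro Bochner_Integration.integral_nonneg) (auto simp: indicator_def)
  have B0: "0 \<le> B" unfolding B_def I_def by (intro Bochner_Integration.integral_nonneg) (auto simp: indicator_def)
  have H: "2 * X \<le> t * A + B / t" if t: "t > 0" for t
  proof -
    have "2 * X = I (\<lambda>x. 2 * (cmod (u x) * cmod (w x)))"
      unfolding X_def I_def by (simp flip: integral_mult_right_zero add: mult_ac)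
    also have "\<dots> \<le> I (\<lambda>x. t * (cmod (u x))\<^sup>2 + (1/t) * (cmod (w x))\<^sup>2)"
      unfolding I_def
    proof (rule Bochner_Integration.integral_mono)
      show "integrable lebesgue (\<lambda>x. indicator S x *\<^sub>R (2 * (cmod (u x) * cmod (w x))))"
        using int[OF bb_scale[OF bb_normmult[OF u w], of 2]] by simp
      show "integrable lebesgue (\<lambda>x. indicator S x *\<^sub>R (t * (cmod (u x))\<^sup>2 + (1/t) * (cmod (w x))\<^sup>2))"
        using int[OF bb_add[OF bb_scale[OF bb_sq[OF u], of t] bb_scale[OF bb_sq[OF w], of "1/t"]]] by simp
      fix x
      have "2 * (cmod (u x) * cmod (w x)) \<le> t * (cmod (u x))\<^sup>2 + (cmod (w x))\<^sup>2 / t"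
      proof -
        have "0 \<le> (t * cmod (u x) - cmod (w x))\<^sup>2 / t" using t by simp
        then show ?thesis using t by (simp add: power2_eq_square field_simps) 
      qed
      then show "indicator S x *\<^sub>R (2 * (cmod (u x) * cmod (w x))) \<le> indicator S x *\<^sub>R (t * (cmod (u x))\<^sup>2 + (1/t) * (cmod (w x))\<^sup>2)"
        by (auto simp: indicator_def)
    qed
    also have "I (\<lambda>x. t * (cmod (u x))\<^sup>2 + (1/t) * (cmod (w x))\<^sup>2) = I (\<lambda>x. t * (cmod (u x))\<^sup>2) + I (\<lambda>x. (1/t) * (cmod (w x))\<^sup>2)"
      unfolding I_def
      unfolding real_scaleR_def distrib_left
      by (rule Bochner_Integration.integral_add)
         (use int[OF bb_scale[OF bb_sq[OF u], of t]] int[OF bb_scale[OF bb_sq[OF w], of "1/t"]] in simp_all)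
    also have "\<dots> = t * A + B / t"
      unfolding I_def A_def B_def by (simp flip: integral_mult_right_zero add: mult_ac)
    finally show ?thesis .
  qed
  have "X \<le> sqrt A * sqrt B" by (rule cs_abstract[OF A0 B0 H])
  then show ?thesis using 1
    unfolding L2_norm_on_def A_def B_def I_def set_lebesgue_integral_def by simp
qed


lemma bf_J:
  assumes "DIM('a::euclidean_space) = 2 \<or> DIM('a) = 3" "F \<in> boundary_facets (\<Omega>::'a set) T"
  shows "0 \<le> sJ F"
proof -
  have "card F = DIM('a)" using assms(2) by (auto simp: boundary_facets_def)
  then have "sm F = 1 \<or> sm F = 2" using assms(1) by (auto simp: sm_def)
  then show ?thesis by (rule sJ_nonneg)
qed

lemma bdry_diff:
  assumes "bb f" "bb g" "G \<in> sets borel"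
  shows "bdry_integral \<Omega> T G (\<lambda>x. f x - g x) = bdry_integral \<Omega> T G f - bdry_integral \<Omega> T G g"
proof -
  have "simplex_integral F (\<lambda>x. indicator G x *\<^sub>R (f x - g x))
      = simplex_integral F (\<lambda>x. indicator G x *\<^sub>R f x) - simplex_integral F (\<lambda>x. indicator G x *\<^sub>R g x)" for F
    using si_diff[OF bb_ind[OF assms(3) assms(1)] bb_ind[OF assms(3) assms(2)], of F]
    by (simp add: scaleR_diff_right)
  then show ?thesis unfolding bdry_integral_def by (simp add: sum_subtractf)
qed

lemma bdry_nonneg:
  fixes f :: "'a::euclidean_space \<Rightarrow> real"
  assumes "DIM('a) = 2 \<or> DIM('a) = 3" "\<And>x. 0 \<le> f x"
  shows "0 \<le> bdry_integral \<Omega> T G f"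
  unfolding bdry_integral_def
  by (intro sum_nonneg si_nonneg bf_J[OF assms(1)]) (auto simp: assms(2) indicator_def)

lemma bdry_cs:
  fixes u w :: "'a::euclidean_space \<Rightarrow> complex"
  assumes dim: "DIM('a) = 2 \<or> DIM('a) = 3" and u: "bb u" and w: "bb w" and G: "G \<in> sets borel"
  shows "cmod (bdry_integral \<Omega> T G (\<lambda>x. u x * cnj (w x))) \<le> bdry_norm_on \<Omega> T G u * bdry_norm_on \<Omega> T G w"
proof -
  define BF where "BF = boundary_facets \<Omega> T"
  have J: "F \<in> BF \<Longrightarrow> 0 \<le> sJ F" for F unfolding BF_def using bf_J[OF dim] by blast
  define I where "I f = bdry_integral \<Omega> T G f" for f :: "'a \<Rightarrow> real"
  define X where "X = I (\<lambda>x. cmod (u x) * cmod (w x))"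
  define A where "A = I (\<lambda>x. (cmod (u x))\<^sup>2)"
  define B where "B = I (\<lambda>x. (cmod (w x))\<^sup>2)"
  have "cmod (bdry_integral \<Omega> T G (\<lambda>x. u x * cnj (w x)))
      \<le> (\<Sum>F\<in>BF. norm (simplex_integral F (\<lambda>x. indicator G x *\<^sub>R (u x * cnj (w x)))))"
    unfolding bdry_integral_def BF_def by (rule norm_sum)
  also have "\<dots> \<le> (\<Sum>F\<in>BF. simplex_integral F (\<lambda>x. norm (indicator G x *\<^sub>R (u x * cnj (w x)))))"
    by (intro sum_mono si_norm J)
  also have "(\<lambda>x. norm (indicator G x *\<^sub>R (u x * cnj (w x)))) = (\<lambda>x. indicator G x *\<^sub>R (cmod (u x) * cmod (w x)))"
    by (auto simp: indicator_def norm_mult)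
  finally have 1: "cmod (bdry_integral \<Omega> T G (\<lambda>x. u x * cnj (w x))) \<le> X"
    unfolding X_def I_def bdry_integral_def BF_def .
  have A0: "0 \<le> A" unfolding A_def I_def by (intro bdry_nonneg dim) simp
  have B0: "0 \<le> B" unfolding B_def I_def by (intro bdry_nonneg dim) simp
  have H: "2 * X \<le> t * A + B / t" if t: "t > 0" for t
  proof -
    have bu: "bb (\<lambda>x. indicator G x *\<^sub>R (cmod (u x))\<^sup>2)" by (intro bb_ind G bb_sq u)
    have bw: "bb (\<lambda>x. indicator G x *\<^sub>R (cmod (w x))\<^sup>2)" by (intro bb_ind G bb_sq w)
    have buw: "bb (\<lambda>x. indicator G x *\<^sub>R (cmod (u x) * cmod (w x)))" by (intro bb_ind G bb_normmult u w)
    have per: "2 * simplex_integral F (\<lambda>x. indicator G x *\<^sub>R (cmod (u x) * cmod (w x)))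
        \<le> t * simplex_integral F (\<lambda>x. indicator G x *\<^sub>R (cmod (u x))\<^sup>2)
          + simplex_integral F (\<lambda>x. indicator G x *\<^sub>R (cmod (w x))\<^sup>2) / t" if F: "F \<in> BF" for F
    proof -
      have "2 * simplex_integral F (\<lambda>x. indicator G x *\<^sub>R (cmod (u x) * cmod (w x)))
          = simplex_integral F (\<lambda>x. 2 *\<^sub>R (indicator G x *\<^sub>R (cmod (u x) * cmod (w x))))"
        using si_scale[of F 2 "\<lambda>x. indicator G x *\<^sub>R (cmod (u x) * cmod (w x))"]
        by (simp only: real_scaleR_def)
      also have "\<dots> \<le> simplex_integral F (\<lambda>x. t *\<^sub>R (indicator G x *\<^sub>R (cmod (u x))\<^sup>2) + (1/t) *\<^sub>R (indicator G x *\<^sub>R (cmod (w x))\<^sup>2))"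
      proof (rule si_mono[OF bb_scale[OF buw] bb_add[OF bb_scale[OF bu] bb_scale[OF bw]] _ J[OF F]])
        fix x
        have "2 * (cmod (u x) * cmod (w x)) \<le> t * (cmod (u x))\<^sup>2 + (1/t) * (cmod (w x))\<^sup>2"
        proof -
          have "0 \<le> (t * cmod (u x) - cmod (w x))\<^sup>2 / t" using t by simp
          then show ?thesis using t by (simp add: power2_eq_square field_simps)
        qed
        then show "2 *\<^sub>R (indicator G x *\<^sub>R (cmod (u x) * cmod (w x))) \<le> t *\<^sub>R (indicator G x *\<^sub>R (cmod (u x))\<^sup>2) + (1/t) *\<^sub>R (indicator G x *\<^sub>R (cmod (w x))\<^sup>2)"
          by (auto simp: indicator_def)
      qed
      also have "\<dots> = simplex_integral F (\<lambda>x. t *\<^sub>R (indicator G x *\<^sub>R (cmod (u x))\<^sup>2))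
          + simplex_integral F (\<lambda>x. (1/t) *\<^sub>R (indicator G x *\<^sub>R (cmod (w x))\<^sup>2))"
        by (rule si_add[OF bb_scale[OF bu] bb_scale[OF bw]])
      also have "\<dots> = t * simplex_integral F (\<lambda>x. indicator G x *\<^sub>R (cmod (u x))\<^sup>2)
          + simplex_integral F (\<lambda>x. indicator G x *\<^sub>R (cmod (w x))\<^sup>2) / t"
        unfolding si_scale[of F t] si_scale[of F "1/t"] by simp
      finally show ?thesis .
    qed
    have "2 * X = (\<Sum>F\<in>BF. 2 * simplex_integral F (\<lambda>x. indicator G x *\<^sub>R (cmod (u x) * cmod (w x))))"
      unfolding X_def I_def bdry_integral_def BF_def by (simp add: sum_distrib_left)
    also have "\<dots> \<le> (\<Sum>F\<in>BF. t * simplex_integral F (\<lambda>x. indicator G x *\<^sub>R (cmod (u x))\<^sup>2)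
          + simplex_integral F (\<lambda>x. indicator G x *\<^sub>R (cmod (w x))\<^sup>2) / t)"
      by (intro sum_mono per)
    also have "\<dots> = t * A + B / t"
      unfolding A_def B_def I_def bdry_integral_def BF_def
      by (simp add: sum.distrib sum_distrib_left sum_divide_distrib)
    finally show ?thesis .
  qed
  have "X \<le> sqrt A * sqrt B" by (rule cs_abstract[OF A0 B0 H])
  then show ?thesis using 1
    unfolding bdry_norm_on_def A_def B_def I_def by simp
qed

definition good :: "'a::euclidean_space set \<Rightarrow> ('a \<Rightarrow> complex) \<Rightarrow> bool" where
  "good \<Omega> u \<longleftrightarrow> bb u \<and> (\<exists>N\<in>null_sets lebesgue. \<exists>B. \<forall>x\<in>\<Omega> - N. \<exists>D. (u has_derivative D) (at x) \<and> (\<forall>b\<in>Basis. cmod (D b) \<le> B))"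

lemma good_P1:
  assumes "bounded \<Omega>" "simplicial_mesh \<Omega> T" "u \<in> P1_space \<Omega> T"
  shows "good \<Omega> u"
  using P1_borel[OF assms(3)] P1_bounded[OF assms(3,1)] P1_deriv[OF assms(3,2)]
  unfolding good_def bb_def by auto

lemma good_fd:
  assumes "good \<Omega> u"
  obtains N B where "N \<in> null_sets lebesgue"
    "\<And>x. x \<in> \<Omega> - N \<Longrightarrow> (u has_derivative frechet_derivative u (at x)) (at x) \<and> (\<forall>b\<in>Basis. cmod (frechet_derivative u (at x) b) \<le> B)"
proof -
  obtain N B where N: "N \<in> null_sets lebesgue" and H: "\<forall>x\<in>\<Omega> - N. \<exists>D. (u has_derivative D) (at x) \<and> (\<forall>b\<in>Basis. cmod (D b) \<le> B)"
    using assms unfolding good_def by blast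
  show ?thesis
  proof (rule that[OF N])
    fix x assume "x \<in> \<Omega> - N"
    then obtain D where "(u has_derivative D) (at x)" "\<forall>b\<in>Basis. cmod (D b) \<le> B" using H by blast
    moreover from this(1) have "D = frechet_derivative u (at x)" by (rule frechet_derivative_at)
    ultimately show "(u has_derivative frechet_derivative u (at x)) (at x) \<and> (\<forall>b\<in>Basis. cmod (frechet_derivative u (at x) b) \<le> B)"
      by simp
  qed
qed

lemma good_diff:
  assumes "good \<Omega> u" "good \<Omega> w"
  shows "good \<Omega> (\<lambda>x. u x - w x)"
proof -
  obtain N1 B1 where N1: "N1 \<in> null_sets lebesgue" and H1: "\<And>x. x \<in> \<Omega> - N1 \<Longrightarrow> (u has_derivative frechet_derivative u (at x)) (at x) \<and> (\<forall>b\<in>Basis. cmod (frechet_derivative u (at x) b) \<le> B1)"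
    using good_fd[OF assms(1)] by metis
  obtain N2 B2 where N2: "N2 \<in> null_sets lebesgue" and H2: "\<And>x. x \<in> \<Omega> - N2 \<Longrightarrow> (w has_derivative frechet_derivative w (at x)) (at x) \<and> (\<forall>b\<in>Basis. cmod (frechet_derivative w (at x) b) \<le> B2)"
    using good_fd[OF assms(2)] by metis
  have "\<forall>x\<in>\<Omega> - (N1 \<union> N2). \<exists>D. ((\<lambda>x. u x - w x) has_derivative D) (at x) \<and> (\<forall>b\<in>Basis. cmod (D b) \<le> B1 + B2)"
  proof
    fix x assume x: "x \<in> \<Omega> - (N1 \<union> N2)"
    have "((\<lambda>x. u x - w x) has_derivative (\<lambda>h. frechet_derivative u (at x) h - frechet_derivative w (at x) h)) (at x)"
      using H1[of x] H2[of x] x by (intro has_derivative_diff) auto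
    moreover have "\<forall>b\<in>Basis. cmod (frechet_derivative u (at x) b - frechet_derivative w (at x) b) \<le> B1 + B2"
      using H1[of x] H2[of x] x by (auto intro: norm_triangle_le_diff add_mono)
    ultimately show "\<exists>D. ((\<lambda>x. u x - w x) has_derivative D) (at x) \<and> (\<forall>b\<in>Basis. cmod (D b) \<le> B1 + B2)"
      by blast
  qed
  moreover have "bb (\<lambda>x. u x - w x)" using assms bb_diff unfolding good_def by blast
  ultimately show ?thesis unfolding good_def using N1 N2 by blast
qed

lemma good_add:
  assumes "good \<Omega> u" "good \<Omega> w"
  shows "good \<Omega> (\<lambda>x. u x + w x)"
proof -
  obtain N1 B1 where N1: "N1 \<in> null_sets lebesgue" and H1: "\<And>x. x \<in> \<Omega> - N1 \<Longrightarrow> (u has_derivative frechet_derivative u (at x)) (at x) \<and> (\<forall>b\<in>Basis. cmod (frechet_derivative u (at x) b) \<le> B1)"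
    using good_fd[OF assms(1)] by metis
  obtain N2 B2 where N2: "N2 \<in> null_sets lebesgue" and H2: "\<And>x. x \<in> \<Omega> - N2 \<Longrightarrow> (w has_derivative frechet_derivative w (at x)) (at x) \<and> (\<forall>b\<in>Basis. cmod (frechet_derivative w (at x) b) \<le> B2)"
    using good_fd[OF assms(2)] by metis
  have "\<forall>x\<in>\<Omega> - (N1 \<union> N2). \<exists>D. ((\<lambda>x. u x + w x) has_derivative D) (at x) \<and> (\<forall>b\<in>Basis. cmod (D b) \<le> B1 + B2)"
  proof
    fix x assume x: "x \<in> \<Omega> - (N1 \<union> N2)"
    have "((\<lambda>x. u x + w x) has_derivative (\<lambda>h. frechet_derivative u (at x) h + frechet_derivative w (at x) h)) (at x)"
      using H1[of x] H2[of x] x by (intro has_derivative_add) auto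
    moreover have "\<forall>b\<in>Basis. cmod (frechet_derivative u (at x) b + frechet_derivative w (at x) b) \<le> B1 + B2"
      using H1[of x] H2[of x] x by (auto intro: norm_triangle_le add_mono)
    ultimately show "\<exists>D. ((\<lambda>x. u x + w x) has_derivative D) (at x) \<and> (\<forall>b\<in>Basis. cmod (D b) \<le> B1 + B2)"
      by blast
  qed
  moreover have "bb (\<lambda>x. u x + w x)" using assms bb_add unfolding good_def by blast
  ultimately show ?thesis unfolding good_def using N1 N2 by blast
qed

lemma good_zero: "good \<Omega> (\<lambda>x. 0)"
  unfolding good_def bb_def
  by (auto intro!: bexI[of _ "{}"] exI[of _ 0] exI[of _ "\<lambda>h. 0"])

lemma good_sum:
  assumes "finite I" "\<And>l. l \<in> I \<Longrightarrow> good \<Omega> (Q l)"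
  shows "good \<Omega> (\<lambda>x. \<Sum>l\<in>I. Q l x)"
  using assms
proof (induction I rule: finite_induct)
  case empty then show ?case by (simp add: good_zero)
next
  case (insert a I)
  then show ?case using good_add[of \<Omega> "Q a" "\<lambda>x. \<Sum>l\<in>I. Q l x"] by simp
qed

lemma fd_meas:
  assumes g: "good \<Omega> u" and O: "\<Omega> \<in> sets borel" and b: "b \<in> Basis"
  shows "(\<lambda>x. indicator \<Omega> x *\<^sub>R frechet_derivative u (at x) b) \<in> borel_measurable lebesgue"
proof -
  obtain N B where N: "N \<in> null_sets lebesgue" and H: "\<And>x. x \<in> \<Omega> - N \<Longrightarrow> (u has_derivative frechet_derivative u (at x)) (at x) \<and> (\<forall>b\<in>Basis. cmod (frechet_derivative u (at x) b) \<le> B)"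
    using good_fd[OF g] by metis
  have um[measurable]: "u \<in> borel_measurable borel" using g unfolding good_def bb_def by blast
  define q where "q n x = (u (x + (1 / real (Suc n)) *\<^sub>R b) - u x) * of_real (real (Suc n))" for n x
  have qm: "q n \<in> borel_measurable borel" for n
  proof -
    have "(\<lambda>x. x + (1 / real (Suc n)) *\<^sub>R b) \<in> borel_measurable borel" by measurable
    from measurable_comp[OF this um] have "(\<lambda>x. u (x + (1 / real (Suc n)) *\<^sub>R b)) \<in> borel_measurable borel"
      by (simp add: comp_def)
    then show ?thesis unfolding q_def by measurable
  qed
  define G where "G x = indicator \<Omega> x *\<^sub>R lim (\<lambda>n. q n x)" for x
  have "G \<in> borel_measurable borel"
    unfolding G_def using qm O by measurable
  then have Gm: "G \<in> borel_measurable lebesgue" by (rule bb_lebesgue)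
  have "AE x in lebesgue. G x = indicator \<Omega> x *\<^sub>R frechet_derivative u (at x) b"
  proof (rule AE_I'[OF N])
    show "{x \<in> space lebesgue. \<not> G x = indicator \<Omega> x *\<^sub>R frechet_derivative u (at x) b} \<subseteq> N"
    proof (safe)
      fix x assume ne: "G x \<noteq> indicator \<Omega> x *\<^sub>R frechet_derivative u (at x) b"
      show "x \<in> N"
      proof (rule ccontr)
        assume xN: "x \<notin> N"
        show False
        proof (cases "x \<in> \<Omega>")
          case True
          have "(\<lambda>n. q n x) \<longlonglongrightarrow> frechet_derivative u (at x) b"
            unfolding q_def using H[of x] True xN b by (intro deriv_seq) auto
          then have "lim (\<lambda>n. q n x) = frechet_derivative u (at x) b" by (rule limI)
          then show False using ne True by (simp add: G_def)
        next
          case False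
          then show False using ne by (simp add: G_def)
        qed
      qed
    qed
  qed
  then show ?thesis by (rule borel_measurable_AE[OF Gm])
qed

definition gi :: "('a::euclidean_space \<Rightarrow> complex) \<Rightarrow> ('a \<Rightarrow> complex) \<Rightarrow> 'a \<Rightarrow> complex" where
  "gi u w x = (\<Sum>b\<in>Basis. frechet_derivative u (at x) b * cnj (frechet_derivative w (at x) b))"

lemma grad_form_gi: "grad_form \<Omega> u w = integral\<^sup>L lebesgue (\<lambda>x. indicator \<Omega> x *\<^sub>R gi u w x)"
  unfolding grad_form_def gi_def set_lebesgue_integral_def ..

lemma gi_int:
  assumes gu: "good \<Omega> u" and gw: "good \<Omega> w" and O: "open \<Omega>" "bounded \<Omega>"
  shows "integrable lebesgue (\<lambda>x. indicator \<Omega> x *\<^sub>R gi u w x)"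
proof -
  obtain N1 B1 where N1: "N1 \<in> null_sets lebesgue" and H1: "\<And>x. x \<in> \<Omega> - N1 \<Longrightarrow> (u has_derivative frechet_derivative u (at x)) (at x) \<and> (\<forall>b\<in>Basis. cmod (frechet_derivative u (at x) b) \<le> B1)"
    using good_fd[OF gu] by metis
  obtain N2 B2 where N2: "N2 \<in> null_sets lebesgue" and H2: "\<And>x. x \<in> \<Omega> - N2 \<Longrightarrow> (w has_derivative frechet_derivative w (at x)) (at x) \<and> (\<forall>b\<in>Basis. cmod (frechet_derivative w (at x) b) \<le> B2)"
    using good_fd[OF gw] by metis
  have Ob: "\<Omega> \<in> sets borel" using O by simp
  have eq: "indicator \<Omega> x *\<^sub>R gi u w x = (\<Sum>b\<in>Basis. (indicator \<Omega> x *\<^sub>R frechet_derivative u (at x) b) * cnj (indicator \<Omega> x *\<^sub>R frechet_derivative w (at x) b))" for x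
    by (cases "x \<in> \<Omega>") (auto simp: gi_def)
  have m1[measurable]: "(\<lambda>x. indicator \<Omega> x *\<^sub>R frechet_derivative u (at x) b) \<in> borel_measurable lebesgue" if "b \<in> Basis" for b
    using fd_meas[OF gu Ob that] .
  have m2[measurable]: "(\<lambda>x. indicator \<Omega> x *\<^sub>R frechet_derivative w (at x) b) \<in> borel_measurable lebesgue" if "b \<in> Basis" for b
    using fd_meas[OF gw Ob that] .
  have meas: "(\<lambda>x. indicator \<Omega> x *\<^sub>R gi u w x) \<in> borel_measurable lebesgue"
    unfolding eq by measurable
  have fm: "\<Omega> \<in> lmeasurable" using O by (simp add: lmeasurable_open)
  show ?thesis
  proof (rule integrableI_bounded_set[where A=\<Omega> and B="real DIM('a) * (B1 * B2)"])
    show "\<Omega> \<in> sets lebesgue" using fm by (simp add: fmeasurable_def)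
    show "emeasure lebesgue \<Omega> < \<infinity>" using fm unfolding fmeasurable_def by blast
    show "(\<lambda>x. indicator \<Omega> x *\<^sub>R gi u w x) \<in> borel_measurable lebesgue" by (rule meas)
    show "AE x in lebesgue. x \<notin> \<Omega> \<longrightarrow> indicator \<Omega> x *\<^sub>R gi u w x = 0" by simp
    show "AE x in lebesgue. x \<in> \<Omega> \<longrightarrow> norm (indicator \<Omega> x *\<^sub>R gi u w x) \<le> real DIM('a) * (B1 * B2)"
    proof (rule AE_I'[OF null_sets.Un[OF N1 N2]], rule subsetI, rule ccontr)
      fix x assume xx: "x \<in> {x \<in> space lebesgue. \<not> (x \<in> \<Omega> \<longrightarrow> norm (indicator \<Omega> x *\<^sub>R gi u w x) \<le> real DIM('a) * (B1 * B2))}"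
        and xn: "x \<notin> N1 \<union> N2"
      then have x: "x \<in> \<Omega>" "x \<notin> N1" "x \<notin> N2" by auto
      have ne: "\<not> norm (indicator \<Omega> x *\<^sub>R gi u w x) \<le> real DIM('a) * (B1 * B2)" using xx by auto
      have each: "norm (frechet_derivative u (at x) b * cnj (frechet_derivative w (at x) b)) \<le> B1 * B2"
        if b: "b \<in> Basis" for b
      proof -
        have "cmod (frechet_derivative u (at x) b) \<le> B1" "cmod (frechet_derivative w (at x) b) \<le> B2"
          using H1[of x] H2[of x] x b by auto
        then show ?thesis
          by (auto simp: norm_mult intro!: mult_mono order_trans[OF norm_ge_zero])
      qed
      have "norm (gi u w x) \<le> (\<Sum>b\<in>(Basis::'a set). norm (frechet_derivative u (at x) b * cnj (frechet_derivative w (at x) b)))"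
        unfolding gi_def by (rule norm_sum)
      also have "\<dots> \<le> (\<Sum>b\<in>(Basis::'a set). B1 * B2)"
        by (rule sum_mono) (rule each)
      finally have "norm (gi u w x) \<le> (\<Sum>b\<in>(Basis::'a set). B1 * B2)" .
      then show False using ne x by simp
    qed
  qed
qed

lemma grad_diff1:
  assumes g1: "good \<Omega> u1" and g2: "good \<Omega> u2" and gw: "good \<Omega> w" and O: "open \<Omega>" "bounded \<Omega>"
  shows "grad_form \<Omega> (\<lambda>x. u1 x - u2 x) w = grad_form \<Omega> u1 w - grad_form \<Omega> u2 w"
proof -
  obtain N1 B1 where N1: "N1 \<in> null_sets lebesgue" and H1: "\<And>x. x \<in> \<Omega> - N1 \<Longrightarrow> (u1 has_derivative frechet_derivative u1 (at x)) (at x) \<and> (\<forall>b\<in>Basis. cmod (frechet_derivative u1 (at x) b) \<le> B1)"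
    using good_fd[OF g1] by metis
  obtain N2 B2 where N2: "N2 \<in> null_sets lebesgue" and H2: "\<And>x. x \<in> \<Omega> - N2 \<Longrightarrow> (u2 has_derivative frechet_derivative u2 (at x)) (at x) \<and> (\<forall>b\<in>Basis. cmod (frechet_derivative u2 (at x) b) \<le> B2)"
    using good_fd[OF g2] by metis
  have i1: "integrable lebesgue (\<lambda>x. indicator \<Omega> x *\<^sub>R gi u1 w x)" by (rule gi_int[OF g1 gw O])
  have i2: "integrable lebesgue (\<lambda>x. indicator \<Omega> x *\<^sub>R gi u2 w x)" by (rule gi_int[OF g2 gw O])
  have i3: "integrable lebesgue (\<lambda>x. indicator \<Omega> x *\<^sub>R gi (\<lambda>x. u1 x - u2 x) w x)"
    by (rule gi_int[OF good_diff[OF g1 g2] gw O])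
  have "grad_form \<Omega> u1 w - grad_form \<Omega> u2 w = integral\<^sup>L lebesgue (\<lambda>x. indicator \<Omega> x *\<^sub>R gi u1 w x - indicator \<Omega> x *\<^sub>R gi u2 w x)"
    unfolding grad_form_gi by (rule Bochner_Integration.integral_diff[OF i1 i2, symmetric])
  also have "\<dots> = grad_form \<Omega> (\<lambda>x. u1 x - u2 x) w"
    unfolding grad_form_gi
  proof (rule integral_cong_AE)
    show "(\<lambda>x. indicator \<Omega> x *\<^sub>R gi u1 w x - indicator \<Omega> x *\<^sub>R gi u2 w x) \<in> borel_measurable lebesgue"
      using Bochner_Integration.integrable_diff[OF i1 i2] by (rule borel_measurable_integrable)
    show "(\<lambda>x. indicator \<Omega> x *\<^sub>R gi (\<lambda>x. u1 x - u2 x) w x) \<in> borel_measurable lebesgue"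
      using i3 by (rule borel_measurable_integrable)
    show "AE x in lebesgue. indicator \<Omega> x *\<^sub>R gi u1 w x - indicator \<Omega> x *\<^sub>R gi u2 w x = indicator \<Omega> x *\<^sub>R gi (\<lambda>x. u1 x - u2 x) w x"
    proof (rule AE_I'[OF null_sets.Un[OF N1 N2]], rule subsetI, rule ccontr)
      fix x assume xx: "x \<in> {x \<in> space lebesgue. \<not> (indicator \<Omega> x *\<^sub>R gi u1 w x - indicator \<Omega> x *\<^sub>R gi u2 w x = indicator \<Omega> x *\<^sub>R gi (\<lambda>x. u1 x - u2 x) w x)}"
        and xn: "x \<notin> N1 \<union> N2"
      then have x: "x \<in> \<Omega>" by (cases "x \<in> \<Omega>") auto
      have "((\<lambda>x. u1 x - u2 x) has_derivative (\<lambda>h. frechet_derivative u1 (at x) h - frechet_derivative u2 (at x) h)) (at x)"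
        using H1[of x] H2[of x] x xn by (intro has_derivative_diff) auto
      then have "(\<lambda>h. frechet_derivative u1 (at x) h - frechet_derivative u2 (at x) h) = frechet_derivative (\<lambda>x. u1 x - u2 x) (at x)"
        by (rule frechet_derivative_at)
      from this[symmetric] have "gi (\<lambda>x. u1 x - u2 x) w x = gi u1 w x - gi u2 w x"
        unfolding gi_def by (simp flip: sum_subtractf add: left_diff_distrib)
      then show False using xx by (simp add: scaleR_diff_right)
    qed
  qed
  finally show ?thesis ..
qed

lemma grad_add2:
  assumes gv: "good \<Omega> v" and g1: "good \<Omega> w1" and g2: "good \<Omega> w2" and O: "open \<Omega>" "bounded \<Omega>"
  shows "grad_form \<Omega> v (\<lambda>x. w1 x + w2 x) = grad_form \<Omega> v w1 + grad_form \<Omega> v w2"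
proof -
  obtain N1 B1 where N1: "N1 \<in> null_sets lebesgue" and H1: "\<And>x. x \<in> \<Omega> - N1 \<Longrightarrow> (w1 has_derivative frechet_derivative w1 (at x)) (at x) \<and> (\<forall>b\<in>Basis. cmod (frechet_derivative w1 (at x) b) \<le> B1)"
    using good_fd[OF g1] by metis
  obtain N2 B2 where N2: "N2 \<in> null_sets lebesgue" and H2: "\<And>x. x \<in> \<Omega> - N2 \<Longrightarrow> (w2 has_derivative frechet_derivative w2 (at x)) (at x) \<and> (\<forall>b\<in>Basis. cmod (frechet_derivative w2 (at x) b) \<le> B2)"
    using good_fd[OF g2] by metis
  have i1: "integrable lebesgue (\<lambda>x. indicator \<Omega> x *\<^sub>R gi v w1 x)" by (rule gi_int[OF gv g1 O])
  have i2: "integrable lebesgue (\<lambda>x. indicator \<Omega> x *\<^sub>R gi v w2 x)" by (rule gi_int[OF gv g2 O])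
  have i3: "integrable lebesgue (\<lambda>x. indicator \<Omega> x *\<^sub>R gi v (\<lambda>x. w1 x + w2 x) x)"
    by (rule gi_int[OF gv good_add[OF g1 g2] O])
  have "grad_form \<Omega> v w1 + grad_form \<Omega> v w2 = integral\<^sup>L lebesgue (\<lambda>x. indicator \<Omega> x *\<^sub>R gi v w1 x + indicator \<Omega> x *\<^sub>R gi v w2 x)"
    unfolding grad_form_gi by (rule Bochner_Integration.integral_add[OF i1 i2, symmetric])
  also have "\<dots> = grad_form \<Omega> v (\<lambda>x. w1 x + w2 x)"
    unfolding grad_form_gi
  proof (rule integral_cong_AE)
    show "(\<lambda>x. indicator \<Omega> x *\<^sub>R gi v w1 x + indicator \<Omega> x *\<^sub>R gi v w2 x) \<in> borel_measurable lebesgue"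
      using Bochner_Integration.integrable_add[OF i1 i2] by (rule borel_measurable_integrable)
    show "(\<lambda>x. indicator \<Omega> x *\<^sub>R gi v (\<lambda>x. w1 x + w2 x) x) \<in> borel_measurable lebesgue"
      using i3 by (rule borel_measurable_integrable)
    show "AE x in lebesgue. indicator \<Omega> x *\<^sub>R gi v w1 x + indicator \<Omega> x *\<^sub>R gi v w2 x = indicator \<Omega> x *\<^sub>R gi v (\<lambda>x. w1 x + w2 x) x"
    proof (rule AE_I'[OF null_sets.Un[OF N1 N2]], rule subsetI, rule ccontr)
      fix x assume xx: "x \<in> {x \<in> space lebesgue. \<not> (indicator \<Omega> x *\<^sub>R gi v w1 x + indicator \<Omega> x *\<^sub>R gi v w2 x = indicator \<Omega> x *\<^sub>R gi v (\<lambda>x. w1 x + w2 x) x)}"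
        and xn: "x \<notin> N1 \<union> N2"
      then have x: "x \<in> \<Omega>" by (cases "x \<in> \<Omega>") auto
      have "((\<lambda>x. w1 x + w2 x) has_derivative (\<lambda>h. frechet_derivative w1 (at x) h + frechet_derivative w2 (at x) h)) (at x)"
        using H1[of x] H2[of x] x xn by (intro has_derivative_add) auto
      then have "(\<lambda>h. frechet_derivative w1 (at x) h + frechet_derivative w2 (at x) h) = frechet_derivative (\<lambda>x. w1 x + w2 x) (at x)"
        by (rule frechet_derivative_at)
      from this[symmetric] have "gi v (\<lambda>x. w1 x + w2 x) x = gi v w1 x + gi v w2 x"
        unfolding gi_def by (simp flip: sum.distrib add: distrib_left)
      then show False using xx by (simp add: scaleR_add_right)
    qed
  qed
  finally show ?thesis ..
qed

lemma grad_zero2: "grad_form \<Omega> v (\<lambda>x. 0) = 0"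
proof -
  have "frechet_derivative (\<lambda>x. 0::complex) (at x) = (\<lambda>h. 0)" for x :: 'a
    by (rule frechet_derivative_at[symmetric]) (rule has_derivative_const)
  then show ?thesis unfolding grad_form_gi gi_def by simp
qed

lemma grad_sum2:
  assumes "finite I" "good \<Omega> v" "\<And>l. l \<in> I \<Longrightarrow> good \<Omega> (Q l)" "open \<Omega>" "bounded \<Omega>"
  shows "grad_form \<Omega> v (\<lambda>x. \<Sum>l\<in>I. Q l x) = (\<Sum>l\<in>I. grad_form \<Omega> v (Q l))"
  using assms(1,3)
proof (induction I rule: finite_induct)
  case empty then show ?case by (simp add: grad_zero2)
next
  case (insert a I)
  have "grad_form \<Omega> v (\<lambda>x. \<Sum>l\<in>insert a I. Q l x) = grad_form \<Omega> v (\<lambda>x. Q a x + (\<Sum>l\<in>I. Q l x))"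
    using insert.hyps by simp
  also have "\<dots> = grad_form \<Omega> v (Q a) + grad_form \<Omega> v (\<lambda>x. \<Sum>l\<in>I. Q l x)"
    using grad_add2[OF assms(2) insert.prems[of a] good_sum[OF insert.hyps(1)] assms(4,5), of Q] insert.prems
    by (simp add: eta_contract_eq)
  finally show ?case using insert by simp
qed

lemma grad_self:
  "grad_form \<Omega> u u = complex_of_real (integral\<^sup>L lebesgue (\<lambda>x. indicator \<Omega> x * (\<Sum>b\<in>Basis. (cmod (frechet_derivative u (at x) b))\<^sup>2)))"
proof -
  have e: "indicator \<Omega> x *\<^sub>R gi u u x = complex_of_real (indicator \<Omega> x * (\<Sum>b\<in>Basis. (cmod (frechet_derivative u (at x) b))\<^sup>2))" for x
  proof -
    have "gi u u x = of_real (\<Sum>b\<in>Basis. (cmod (frechet_derivative u (at x) b))\<^sup>2)"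
      unfolding gi_def of_real_sum by (simp only: complex_norm_square)
    then show ?thesis by (simp only: scaleR_conv_of_real of_real_mult)
  qed
  show ?thesis unfolding grad_form_gi e by (rule integral_complex_of_real)
qed

lemma grad_self_nonneg:
  "0 \<le> integral\<^sup>L lebesgue (\<lambda>x. indicator \<Omega> x * (\<Sum>b\<in>Basis. (cmod (frechet_derivative u (at x) b))\<^sup>2))"
  by (intro Bochner_Integration.integral_nonneg mult_nonneg_nonneg sum_nonneg) auto

lemma L2_form_eq: "L2_form S u w = integral\<^sup>L lebesgue (\<lambda>x. indicator S x *\<^sub>R (u x * cnj (w x)))"
  unfolding L2_form_def set_lebesgue_integral_def ..

lemma L2_diff1:
  assumes "bb u1" "bb u2" "bb w" "S \<in> sets lebesgue" "bounded S"
  shows "L2_form S (\<lambda>x. u1 x - u2 x) w = L2_form S u1 w - L2_form S u2 w"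
proof -
  have i1: "integrable lebesgue (\<lambda>x. indicator S x *\<^sub>R (u1 x * cnj (w x)))"
    by (rule leb_int[OF bb_mult[OF assms(1,3)] assms(4,5)])
  have i2: "integrable lebesgue (\<lambda>x. indicator S x *\<^sub>R (u2 x * cnj (w x)))"
    by (rule leb_int[OF bb_mult[OF assms(2,3)] assms(4,5)])
  have "(\<lambda>x. indicator S x *\<^sub>R ((u1 x - u2 x) * cnj (w x))) = (\<lambda>x. indicator S x *\<^sub>R (u1 x * cnj (w x)) - indicator S x *\<^sub>R (u2 x * cnj (w x)))"
    by (simp add: left_diff_distrib scaleR_diff_right)
  then show ?thesis unfolding L2_form_eq
    using Bochner_Integration.integral_diff[OF i1 i2] by simp
qed

lemma L2_add2:
  assumes "bb v" "bb w1" "bb w2" "S \<in> sets lebesgue" "bounded S"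
  shows "L2_form S v (\<lambda>x. w1 x + w2 x) = L2_form S v w1 + L2_form S v w2"
proof -
  have i1: "integrable lebesgue (\<lambda>x. indicator S x *\<^sub>R (v x * cnj (w1 x)))"
    by (rule leb_int[OF bb_mult[OF assms(1,2)] assms(4,5)])
  have i2: "integrable lebesgue (\<lambda>x. indicator S x *\<^sub>R (v x * cnj (w2 x)))"
    by (rule leb_int[OF bb_mult[OF assms(1,3)] assms(4,5)])
  have "(\<lambda>x. indicator S x *\<^sub>R (v x * cnj (w1 x + w2 x))) = (\<lambda>x. indicator S x *\<^sub>R (v x * cnj (w1 x)) + indicator S x *\<^sub>R (v x * cnj (w2 x)))"
    by (simp add: distrib_left scaleR_add_right)
  then show ?thesis unfolding L2_form_eq
    using Bochner_Integration.integral_add[OF i1 i2] by simp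
qed

lemma L2_zero2: "L2_form S v (\<lambda>x. 0) = 0"
  unfolding L2_form_eq by simp

lemma L2_self: "L2_form S u u = complex_of_real (integral\<^sup>L lebesgue (\<lambda>x. indicator S x * (cmod (u x))\<^sup>2))"
proof -
  have e: "indicator S x *\<^sub>R (u x * cnj (u x)) = complex_of_real (indicator S x * (cmod (u x))\<^sup>2)" for x
    by (simp only: complex_norm_square[symmetric] scaleR_conv_of_real of_real_mult)
  show ?thesis unfolding L2_form_eq e by (rule integral_complex_of_real)
qed

lemma L2_self_nonneg: "0 \<le> integral\<^sup>L lebesgue (\<lambda>x. indicator S x * (cmod (u x))\<^sup>2)"
  by (intro Bochner_Integration.integral_nonneg mult_nonneg_nonneg) auto

lemma good_bb: "good \<Omega> u \<Longrightarrow> bb u" unfolding good_def by blast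

lemma open_leb: "open S \<Longrightarrow> bounded S \<Longrightarrow> S \<in> sets lebesgue"
  using lmeasurable_open[of S] unfolding fmeasurable_def by blast

lemma ip1k_diff1:
  assumes "good \<Omega> u1" "good \<Omega> u2" "good \<Omega> w" "open \<Omega>" "bounded \<Omega>"
  shows "ip1k \<Omega> k (\<lambda>x. u1 x - u2 x) w = ip1k \<Omega> k u1 w - ip1k \<Omega> k u2 w"
  unfolding ip1k_def grad_diff1[OF assms]
    L2_diff1[OF good_bb[OF assms(1)] good_bb[OF assms(2)] good_bb[OF assms(3)] open_leb[OF assms(4,5)] assms(5)]
  by (simp add: algebra_simps)

lemma ip1k_sum2:
  assumes "finite I" "good \<Omega> v" "\<And>l. l \<in> I \<Longrightarrow> good \<Omega> (Q l)" "open \<Omega>" "bounded \<Omega>"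
  shows "ip1k \<Omega> k v (\<lambda>x. \<Sum>l\<in>I. Q l x) = (\<Sum>l\<in>I. ip1k \<Omega> k v (Q l))"
proof -
  have "L2_form \<Omega> v (\<lambda>x. \<Sum>l\<in>I. Q l x) = (\<Sum>l\<in>I. L2_form \<Omega> v (Q l))"
    using assms(1,3)
  proof (induction I rule: finite_induct)
    case empty then show ?case by (simp add: L2_zero2)
  next
    case (insert a I)
    have "L2_form \<Omega> v (\<lambda>x. \<Sum>l\<in>insert a I. Q l x) = L2_form \<Omega> v (\<lambda>x. Q a x + (\<Sum>l\<in>I. Q l x))"
      using insert.hyps by simp
    also have "\<dots> = L2_form \<Omega> v (Q a) + L2_form \<Omega> v (\<lambda>x. \<Sum>l\<in>I. Q l x)"
      using L2_add2[OF good_bb[OF assms(2)] good_bb[OF insert.prems[of a]] good_bb[OF good_sum[OF insert.hyps(1)]], of \<Omega> Q] insert.prems assms(4,5)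
      by (simp add: eta_contract_eq)
    finally show ?case using insert by simp
  qed
  then show ?thesis
    unfolding ip1k_def using grad_sum2[OF assms]
    by (simp add: sum.distrib sum_distrib_left)
qed

lemma ip1k_self:
  "ip1k \<Omega> k u u = complex_of_real ((norm1k \<Omega> k u)\<^sup>2)"
proof -
  define g where "g = integral\<^sup>L lebesgue (\<lambda>x. indicator \<Omega> x * (\<Sum>b\<in>Basis. (cmod (frechet_derivative u (at x) b))\<^sup>2))"
  define l where "l = integral\<^sup>L lebesgue (\<lambda>x. indicator \<Omega> x * (cmod (u x))\<^sup>2)"
  have "ip1k \<Omega> k u u = complex_of_real (g + k\<^sup>2 * l)"
    unfolding ip1k_def grad_self L2_self g_def l_def by simp
  moreover have "0 \<le> g + k\<^sup>2 * l"
    unfolding g_def l_def using grad_self_nonneg L2_self_nonneg by (intro add_nonneg_nonneg mult_nonneg_nonneg) auto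
  ultimately show ?thesis unfolding norm1k_def by simp
qed

lemma a_diff1:
  assumes "good \<Omega> u1" "good \<Omega> u2" "good \<Omega> w" "open \<Omega>" "bounded \<Omega>"
  shows "a_eps \<Omega> T k \<epsilon> \<eta> (\<lambda>x. u1 x - u2 x) w = a_eps \<Omega> T k \<epsilon> \<eta> u1 w - a_eps \<Omega> T k \<epsilon> \<eta> u2 w"
proof -
  have b: "bdry_integral \<Omega> T (frontier \<Omega>) (\<lambda>x. (u1 x - u2 x) * cnj (w x))
     = bdry_integral \<Omega> T (frontier \<Omega>) (\<lambda>x. u1 x * cnj (w x)) - bdry_integral \<Omega> T (frontier \<Omega>) (\<lambda>x. u2 x * cnj (w x))"
    using bdry_diff[OF bb_mult[OF good_bb[OF assms(1)] good_bb[OF assms(3)]] bb_mult[OF good_bb[OF assms(2)] good_bb[OF assms(3)]], of "frontier \<Omega>" \<Omega> T]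
    by (simp add: left_diff_distrib del: bdry_integral_def)
  show ?thesis
    unfolding a_eps_def grad_diff1[OF assms] b
      L2_diff1[OF good_bb[OF assms(1)] good_bb[OF assms(2)] good_bb[OF assms(3)] open_leb[OF assms(4,5)] assms(5)]
    by (simp add: algebra_simps)
qed

lemma lip_frontier:
  fixes \<Omega> :: "'a::euclidean_space set"
  assumes O: "open \<Omega>" and L: "lipschitz_domain \<Omega>" and x0: "x0 \<in> frontier \<Omega>"
  shows "x0 \<notin> interior (closure \<Omega>)"
proof
  assume "x0 \<in> interior (closure \<Omega>)"
  then obtain e where e: "e > 0" "ball x0 e \<subseteq> closure \<Omega>"
    using mem_interior by blast
  obtain r \<nu> Lc g where r: "r > 0" and nu: "norm \<nu> = 1"
    and lip: "Lc-lipschitz_on {y. y \<bullet> \<nu> = 0} (g :: 'a \<Rightarrow> real)"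
    and eq: "\<Omega> \<inter> ball x0 r = {x \<in> ball x0 r. x \<bullet> \<nu> < g (x - (x \<bullet> \<nu>) *\<^sub>R \<nu>)}"
    using L x0 unfolding lipschitz_domain_def by blast
  define \<pi> where "\<pi> x = x - (x \<bullet> \<nu>) *\<^sub>R \<nu>" for x
  have nn: "\<nu> \<bullet> \<nu> = 1" using nu by (simp add: norm_eq_1)
  have pH: "\<pi> ` UNIV \<subseteq> {y. y \<bullet> \<nu> = 0}"
    by (auto simp: \<pi>_def inner_diff_left nn)
  have gc: "continuous_on {y. y \<bullet> \<nu> = 0} g" by (rule lipschitz_on_continuous_on[OF lip])
  have pc: "continuous_on UNIV \<pi>" unfolding \<pi>_def by (intro continuous_intros)
  have hc: "continuous_on UNIV (\<lambda>x. g (\<pi> x))" by (rule continuous_on_compose2[OF gc pc pH])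
  define C where "C = {x. x \<bullet> \<nu> \<le> g (\<pi> x)}"
  have Cc: "closed C" unfolding C_def
    by (rule closed_Collect_le) (auto intro: continuous_intros hc)
  have x0O: "x0 \<notin> \<Omega>" using x0 O by (simp add: frontier_def interior_open)
  have "x0 \<in> ball x0 r" using r by simp
  then have g0: "g (\<pi> x0) \<le> x0 \<bullet> \<nu>" using eq x0O unfolding \<pi>_def by (auto simp: not_less)
  define t where "t = min r e / 2"
  have t: "t > 0" "t < r" "t < e" using r e by (auto simp: t_def)
  define y where "y = x0 + t *\<^sub>R \<nu>"
  have dy: "dist x0 y = t" using nu t by (simp add: y_def dist_norm)
  have yc: "y \<in> closure \<Omega>" using e dy t by auto
  have yb: "y \<in> ball x0 r" using dy t by simp
  have "y \<in> ball x0 r \<inter> closure \<Omega>" using yc yb by simp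
  also have "\<dots> \<subseteq> closure (ball x0 r \<inter> \<Omega>)" by (rule open_Int_closure_subset) simp
  also have "\<dots> \<subseteq> closure C"
  proof (rule closure_mono, rule subsetI)
    fix x assume "x \<in> ball x0 r \<inter> \<Omega>"
    then have "x \<in> \<Omega> \<inter> ball x0 r" by blast
    then have "x \<bullet> \<nu> < g (x - (x \<bullet> \<nu>) *\<^sub>R \<nu>)" unfolding eq by blast
    then show "x \<in> C" by (simp add: C_def \<pi>_def)
  qed
  also have "\<dots> = C" using Cc by simp
  finally have "y \<bullet> \<nu> \<le> g (\<pi> y)" by (simp add: C_def)
  moreover have "\<pi> y = \<pi> x0" by (simp add: \<pi>_def y_def inner_add_left nn algebra_simps)
  moreover have "y \<bullet> \<nu> = x0 \<bullet> \<nu> + t" by (simp add: y_def inner_add_left nn)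
  ultimately show False using g0 t by simp
qed

lemma frontier_Om_null:
  fixes \<Omega> :: "'a::euclidean_space set"
  assumes M: "simplicial_mesh \<Omega> T" and A: "A \<subseteq> T"
  shows "frontier (interior (\<Union>S\<in>A. convex hull S)) \<in> null_sets lebesgue"
proof -
  have fin: "finite T" and fS: "\<And>S. S \<in> T \<Longrightarrow> finite S" using M by (auto simp: simplicial_mesh_def)
  have finA: "finite A" using fin A finite_subset by blast
  have cl: "S \<in> T \<Longrightarrow> closed (convex hull S)" for S
    using fS by (simp add: compact_imp_closed finite_imp_compact_convex_hull)
  define X where "X = (\<Union>S\<in>A. convex hull S)"
  have Xc: "closed X" unfolding X_def using finA A cl by (intro closed_UN) auto
  have "frontier X \<subseteq> (\<Union>S\<in>A. frontier (convex hull S))"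
  proof
    fix x assume x: "x \<in> frontier X"
    then have xX: "x \<in> X" and xi: "x \<notin> interior X" using Xc by (auto simp: frontier_def)
    then obtain S where S: "S \<in> A" "x \<in> convex hull S" unfolding X_def by blast
    have "interior (convex hull S) \<subseteq> interior X" unfolding X_def using S(1) by (intro interior_mono) auto
    then have "x \<notin> interior (convex hull S)" using xi by blast
    then have "x \<in> frontier (convex hull S)" using S cl[of S] A by (auto simp: frontier_def)
    then show "x \<in> (\<Union>S\<in>A. frontier (convex hull S))" using S by blast
  qed
  moreover have "(\<Union>S\<in>A. frontier (convex hull S)) \<in> null_sets lebesgue"
    using finA
    by (intro null_sets.finite_UN) (auto simp: negligible_iff_null_sets[symmetric] intro!: negligible_convex_frontier)
  ultimately have "frontier X \<in> null_sets lebesgue" by (rule completion.complete2)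
  then show ?thesis unfolding X_def[symmetric]
    using frontier_interior_subset completion.complete2 by blast
qed

lemma L2_restrict:
  fixes f q :: "'a::euclidean_space \<Rightarrow> complex"
  assumes f: "bb f" and q: "bb q" and qz: "\<And>x. x \<notin> closure O' \<Longrightarrow> q x = 0"
    and O': "open O'" "bounded O'" "frontier O' \<in> null_sets lebesgue"
    and O: "open \<Omega>" "bounded \<Omega>"
  shows "cmod (L2_form \<Omega> f q) \<le> L2_norm_on O' f * L2_norm_on O' q"
proof -
  define S where "S = \<Omega> \<inter> closure O'"
  have Sl: "S \<in> sets lebesgue" unfolding S_def
  proof (rule sets.Int)
    show "\<Omega> \<in> sets lebesgue" using O by (rule open_leb)
    show "closure O' \<in> sets lebesgue"
      using O'(2) by (intro lmeasurable_compact[THEN fmeasurableD]) (simp add: compact_closure)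
  qed
  have Sb: "bounded S" unfolding S_def using O by (auto intro: bounded_Int)
  have O'l: "O' \<in> sets lebesgue" using O' open_leb by blast
  have "L2_form \<Omega> f q = L2_form S f q"
    unfolding L2_form_eq S_def by (rule arg_cong[where f="integral\<^sup>L lebesgue"]) (auto simp: indicator_def qz)
  also have "cmod \<dots> \<le> L2_norm_on S f * L2_norm_on S q" by (rule L2_cs[OF f q Sl Sb])
  also have "\<dots> \<le> L2_norm_on O' f * L2_norm_on O' q"
  proof -
    have mono: "L2_norm_on S h \<le> L2_norm_on O' h" if h: "bb h" for h :: "'a \<Rightarrow> complex"
    proof -
      have "integral\<^sup>L lebesgue (\<lambda>x. indicator S x *\<^sub>R (cmod (h x))\<^sup>2) \<le> integral\<^sup>L lebesgue (\<lambda>x. indicator O' x *\<^sub>R (cmod (h x))\<^sup>2)"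
      proof (rule integral_mono_AE)
        show "integrable lebesgue (\<lambda>x. indicator S x *\<^sub>R (cmod (h x))\<^sup>2)" by (rule leb_int[OF bb_sq[OF h] Sl Sb])
        show "integrable lebesgue (\<lambda>x. indicator O' x *\<^sub>R (cmod (h x))\<^sup>2)" by (rule leb_int[OF bb_sq[OF h] O'l O'(2)])
        show "AE x in lebesgue. indicator S x *\<^sub>R (cmod (h x))\<^sup>2 \<le> indicator O' x *\<^sub>R (cmod (h x))\<^sup>2"
        proof (rule AE_I'[OF O'(3)], rule subsetI, rule ccontr)
          fix x assume xx: "x \<in> {x \<in> space lebesgue. \<not> indicator S x *\<^sub>R (cmod (h x))\<^sup>2 \<le> indicator O' x *\<^sub>R (cmod (h x))\<^sup>2}"
            and xn: "x \<notin> frontier O'"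
          have "x \<in> S" "x \<notin> O'" using xx by (cases "x \<in> S"; cases "x \<in> O'"; simp)+
          then show False using xn O'(1) by (auto simp: S_def frontier_def interior_open)
        qed
      qed
      then show ?thesis unfolding L2_norm_on_def set_lebesgue_integral_def by (rule real_sqrt_le_mono)
    qed
    show ?thesis
      by (intro mult_mono mono f q) (auto simp: L2_norm_on_def set_lebesgue_integral_def intro!: Bochner_Integration.integral_nonneg)
  qed
  finally show ?thesis .
qed


lemma core:
  fixes \<Omega> :: "'a::euclidean_space set" and N :: nat and Q :: "nat \<Rightarrow> 'a \<Rightarrow> complex"
    and k \<epsilon> :: real and \<eta> :: complex
  assumes dim: "DIM('a) = 2 \<or> DIM('a) = 3"
    and O: "open \<Omega>" "bounded \<Omega>" and lip: "lipschitz_domain \<Omega>"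
    and mesh: "simplicial_mesh \<Omega> T"
    and mesh0: "simplicial_mesh \<Omega> T0"
    and OmH: "\<forall>l\<in>{1..N}. \<exists>\<A>\<subseteq>T. \<A> \<noteq> {} \<and> Om l = interior (\<Union>S\<in>\<A>. convex hull S)"
    and k: "k > 0" and eps: "\<bar>\<epsilon>\<bar> \<le> c1 * k\<^sup>2" and eta: "cmod \<eta> \<le> c2 * k"
    and v: "v \<in> P1_space \<Omega> T"
    and QH: "\<forall>l\<le>N. Q l \<in> (if l = 0 then P1_space \<Omega> T0 else {w \<in> P1_space \<Omega> T. supp w \<subseteq> closure (Om l)}) \<and>
              (\<forall>w\<in>(if l = 0 then P1_space \<Omega> T0 else {w \<in> P1_space \<Omega> T. supp w \<subseteq> closure (Om l)}).
                 a_eps \<Omega> T k \<epsilon> \<eta> (Q l) w = a_eps \<Omega> T k \<epsilon> \<eta> v w)"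
  shows "ip1k \<Omega> k v (\<lambda>x. \<Sum>l\<le>N. Q l x) =
        (\<Sum>l\<le>N. complex_of_real ((norm1k \<Omega> k (Q l))\<^sup>2) + ip1k \<Omega> k (\<lambda>x. v x - Q l x) (Q l))
     \<and> (\<forall>l\<le>N. cmod (ip1k \<Omega> k (\<lambda>x. v x - Q l x) (Q l)) \<le> (2 + \<bar>c1\<bar> + \<bar>c2\<bar>) *
          (k\<^sup>2 * L2_norm_on (if l = 0 then \<Omega> else Om l) (\<lambda>x. v x - Q l x) * L2_norm_on (if l = 0 then \<Omega> else Om l) (Q l)
           + k * bdry_norm_on \<Omega> T (if l = 0 then frontier \<Omega> else frontier \<Omega> \<inter> frontier (Om l)) (\<lambda>x. v x - Q l x)
               * bdry_norm_on \<Omega> T (if l = 0 then frontier \<Omega> else frontier \<Omega> \<inter> frontier (Om l)) (Q l)))"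
proof -
  define C where "C = 2 + \<bar>c1\<bar> + \<bar>c2\<bar>"
  have gv: "good \<Omega> v" by (rule good_P1[OF O(2) mesh v])
  have QV: "Q l \<in> (if l = 0 then P1_space \<Omega> T0 else {w \<in> P1_space \<Omega> T. supp w \<subseteq> closure (Om l)})" if "l \<le> N" for l
    using QH that by blast
  have gQ: "good \<Omega> (Q l)" if l: "l \<le> N" for l
  proof (cases "l = 0")
    case True then show ?thesis using QV[OF l] good_P1[OF O(2) mesh0] by simp
  next
    case False then show ?thesis using QV[OF l] good_P1[OF O(2) mesh] by simp
  qed
  have part1: "ip1k \<Omega> k v (\<lambda>x. \<Sum>l\<le>N. Q l x) =
        (\<Sum>l\<le>N. complex_of_real ((norm1k \<Omega> k (Q l))\<^sup>2) + ip1k \<Omega> k (\<lambda>x. v x - Q l x) (Q l))"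
  proof -
    have "ip1k \<Omega> k v (\<lambda>x. \<Sum>l\<le>N. Q l x) = (\<Sum>l\<le>N. ip1k \<Omega> k v (Q l))"
      using ip1k_sum2[of "{..N}" \<Omega> v Q k] gv gQ O by simp
    also have "\<dots> = (\<Sum>l\<le>N. complex_of_real ((norm1k \<Omega> k (Q l))\<^sup>2) + ip1k \<Omega> k (\<lambda>x. v x - Q l x) (Q l))"
    proof (rule sum.cong[OF refl])
      fix l assume "l \<in> {..N}"
      then have l: "l \<le> N" by simp
      have "ip1k \<Omega> k (\<lambda>x. v x - Q l x) (Q l) = ip1k \<Omega> k v (Q l) - ip1k \<Omega> k (Q l) (Q l)"
        by (rule ip1k_diff1[OF gv gQ[OF l] gQ[OF l] O])
      then show "ip1k \<Omega> k v (Q l) = complex_of_real ((norm1k \<Omega> k (Q l))\<^sup>2) + ip1k \<Omega> k (\<lambda>x. v x - Q l x) (Q l)"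
        by (simp add: ip1k_self)
    qed
    finally show ?thesis .
  qed
  have part2: "cmod (ip1k \<Omega> k (\<lambda>x. v x - Q l x) (Q l)) \<le> C *
          (k\<^sup>2 * L2_norm_on (if l = 0 then \<Omega> else Om l) (\<lambda>x. v x - Q l x) * L2_norm_on (if l = 0 then \<Omega> else Om l) (Q l)
           + k * bdry_norm_on \<Omega> T (if l = 0 then frontier \<Omega> else frontier \<Omega> \<inter> frontier (Om l)) (\<lambda>x. v x - Q l x)
               * bdry_norm_on \<Omega> T (if l = 0 then frontier \<Omega> else frontier \<Omega> \<inter> frontier (Om l)) (Q l))"
    if l: "l \<le> N" for l
  proof -
    define f where "f = (\<lambda>x. v x - Q l x)"
    define q where "q = Q l"
    define D where "D = (if l = 0 then \<Omega> else Om l)"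
    define G where "G = (if l = 0 then frontier \<Omega> else frontier \<Omega> \<inter> frontier (Om l))"
    have gq: "good \<Omega> q" unfolding q_def by (rule gQ[OF l])
    have gf: "good \<Omega> f" unfolding f_def by (rule good_diff[OF gv gQ[OF l]])
    have bf: "bb f" and bq: "bb q" using gf gq by (auto intro: good_bb)
    have "\<forall>w\<in>(if l = 0 then P1_space \<Omega> T0 else {w \<in> P1_space \<Omega> T. supp w \<subseteq> closure (Om l)}).
                 a_eps \<Omega> T k \<epsilon> \<eta> (Q l) w = a_eps \<Omega> T k \<epsilon> \<eta> v w"
      using QH[rule_format, OF l] by (rule conjunct2)
    from this QV[OF l] have "a_eps \<Omega> T k \<epsilon> \<eta> (Q l) (Q l) = a_eps \<Omega> T k \<epsilon> \<eta> v (Q l)"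
      by (rule bspec)
    moreover have "a_eps \<Omega> T k \<epsilon> \<eta> f q = a_eps \<Omega> T k \<epsilon> \<eta> v (Q l) - a_eps \<Omega> T k \<epsilon> \<eta> (Q l) (Q l)"
      unfolding f_def q_def by (rule a_diff1[OF gv gQ[OF l] gQ[OF l] O])
    ultimately have a0: "a_eps \<Omega> T k \<epsilon> \<eta> f q = 0" by simp
    define L where "L = L2_form \<Omega> f q"
    define Bd where "Bd = bdry_integral \<Omega> T (frontier \<Omega>) (\<lambda>x. f x * cnj (q x))"
    have Req: "ip1k \<Omega> k f q = (of_real (2 * k\<^sup>2) + \<i> * of_real \<epsilon>) * L + \<i> * \<eta> * Bd"
      using a0 unfolding a_eps_def ip1k_def L_def Bd_def
      by (simp add: algebra_simps)
    have c1: "cmod (of_real (2 * k\<^sup>2) + \<i> * of_real \<epsilon>) \<le> 2 * k\<^sup>2 + \<bar>\<epsilon>\<bar>"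
      by (rule order_trans[OF norm_triangle_ineq]) (simp add: norm_mult norm_power del: of_real_power)
    have "cmod (ip1k \<Omega> k f q) \<le> cmod ((of_real (2 * k\<^sup>2) + \<i> * of_real \<epsilon>) * L) + cmod (\<i> * \<eta> * Bd)"
      unfolding Req by (rule norm_triangle_ineq)
    also have "\<dots> = cmod (of_real (2 * k\<^sup>2) + \<i> * of_real \<epsilon>) * cmod L + cmod \<eta> * cmod Bd"
      by (simp add: norm_mult)
    finally have R1: "cmod (ip1k \<Omega> k f q) \<le> cmod (of_real (2 * k\<^sup>2) + \<i> * of_real \<epsilon>) * cmod L + cmod \<eta> * cmod Bd" .
    define X where "X = L2_norm_on D f * L2_norm_on D q"
    define Y where "Y = bdry_norm_on \<Omega> T G f * bdry_norm_on \<Omega> T G q"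
    have X0: "0 \<le> X" unfolding X_def L2_norm_on_def set_lebesgue_integral_def
      by (intro mult_nonneg_nonneg real_sqrt_ge_zero Bochner_Integration.integral_nonneg) auto
    have Y0: "0 \<le> Y" unfolding Y_def bdry_norm_on_def
      by (intro mult_nonneg_nonneg real_sqrt_ge_zero bdry_nonneg dim) auto
    have Gb: "G \<in> sets borel" unfolding G_def by (auto intro!: borel_closed closed_Int)
    have LX: "cmod L \<le> X" and BY: "cmod Bd \<le> Y"
    proof -
      have "cmod L \<le> X \<and> cmod Bd \<le> Y"
      proof (cases "l = 0")
        case True
        have "cmod L \<le> X" unfolding L_def X_def D_def using True
          by (simp add: L2_cs[OF bf bq open_leb[OF O] O(2)])
        moreover have "cmod Bd \<le> Y" unfolding Bd_def Y_def G_def using True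
          by (simp add: bdry_cs[OF dim bf bq borel_closed[OF frontier_closed]])
        ultimately show ?thesis ..
      next
        case False
        then have l1: "l \<in> {1..N}" using l by simp
        then obtain A where A: "A \<subseteq> T" "Om l = interior (\<Union>S\<in>A. convex hull S)" using OmH by blast
        have cov: "(\<Union>S\<in>T. convex hull S) = closure \<Omega>" using mesh by (simp add: simplicial_mesh_def)
        have sub: "(\<Union>S\<in>A. convex hull S) \<subseteq> closure \<Omega>" using A(1) cov by blast
        have Oo: "open (Om l)" using A(2) by simp
        have "Om l \<subseteq> closure \<Omega>" using A(2) sub interior_subset by blast
        then have Ob: "bounded (Om l)" using bounded_subset[OF bounded_closure[OF O(2)]] by blast
        have Ofr: "frontier (Om l) \<in> null_sets lebesgue" using frontier_Om_null[OF mesh A(1)] A(2) by simp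
        have Oint: "Om l \<subseteq> interior (closure \<Omega>)" using A(2) sub by (simp add: interior_mono)
        have qs: "supp q \<subseteq> closure (Om l)" using QV[OF l] False by (simp add: q_def)
        have qz: "q x = 0" if xn: "x \<notin> closure (Om l)" for x
        proof (rule ccontr)
          assume "q x \<noteq> 0"
          then have "x \<in> {x. q x \<noteq> 0}" by simp
          then have "x \<in> supp q" unfolding supp_def using closure_subset by (rule subsetD[rotated])
          then have "x \<in> closure (Om l)" using qs by (rule subsetD[rotated])
          then show False using xn by (rule notE[rotated])
        qed
        have "cmod L \<le> X" unfolding L_def X_def D_def using False
          by (simp add: L2_restrict[OF bf bq qz Oo Ob Ofr O])
        moreover have "cmod Bd \<le> Y"
        proof -
          have "(\<lambda>x. indicator (frontier \<Omega>) x *\<^sub>R (f x * cnj (q x))) = (\<lambda>x. indicator G x *\<^sub>R (f x * cnj (q x)))"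
          proof
            fix x show "indicator (frontier \<Omega>) x *\<^sub>R (f x * cnj (q x)) = indicator G x *\<^sub>R (f x * cnj (q x))"
            proof (cases "x \<in> closure (Om l)")
              case True
              have "x \<in> frontier (Om l)" if xf: "x \<in> frontier \<Omega>"
              proof -
                have "x \<notin> interior (closure \<Omega>)" by (rule lip_frontier[OF O(1) lip xf])
                then have "x \<notin> Om l" using Oint by blast
                then show ?thesis using True Oo by (simp add: frontier_def interior_open)
              qed
              then have "indicator (frontier \<Omega>) x = (indicator G x :: real)"
                unfolding G_def using False by (simp add: indicator_def)
              then show ?thesis by simp
            next
              case False
              then show ?thesis using qz by simp
            qed
          qed
          then have "Bd = bdry_integral \<Omega> T G (\<lambda>x. f x * cnj (q x))"
            unfolding Bd_def bdry_integral_def by simp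
          then show ?thesis unfolding Y_def using bdry_cs[OF dim bf bq Gb] by simp
        qed
        ultimately show ?thesis ..
      qed
      then show "cmod L \<le> X" "cmod Bd \<le> Y" by auto
    qed
    have t1: "cmod (of_real (2 * k\<^sup>2) + \<i> * of_real \<epsilon>) * cmod L \<le> ((2 + \<bar>c1\<bar>) * k\<^sup>2) * X"
    proof -
      have "c1 * k\<^sup>2 \<le> \<bar>c1\<bar> * k\<^sup>2" by (rule mult_right_mono) auto
      then have "\<bar>\<epsilon>\<bar> \<le> \<bar>c1\<bar> * k\<^sup>2" using eps by linarith
      then have A: "cmod (of_real (2 * k\<^sup>2) + \<i> * of_real \<epsilon>) \<le> (2 + \<bar>c1\<bar>) * k\<^sup>2"
        using c1 by (simp add: algebra_simps)
      show ?thesis by (rule mult_mono[OF A LX]) simp_all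
    qed
    have t2: "cmod \<eta> * cmod Bd \<le> (\<bar>c2\<bar> * k) * Y"
    proof -
      have "c2 * k \<le> \<bar>c2\<bar> * k" using k by (intro mult_right_mono) auto
      then have A: "cmod \<eta> \<le> \<bar>c2\<bar> * k" using eta by linarith
      show ?thesis by (rule mult_mono[OF A BY]) (use k in simp_all)
    qed
    have t3: "((2 + \<bar>c1\<bar>) * k\<^sup>2) * X + (\<bar>c2\<bar> * k) * Y \<le> C * (k\<^sup>2 * X + k * Y)"
    proof -
      have "0 \<le> \<bar>c2\<bar> * k\<^sup>2 * X" using X0 by simp
      moreover have "0 \<le> (2 + \<bar>c1\<bar>) * k * Y" using Y0 k by simp
      moreover have "C * (k\<^sup>2 * X + k * Y) = ((2 + \<bar>c1\<bar>) * k\<^sup>2) * X + (\<bar>c2\<bar> * k) * Y + \<bar>c2\<bar> * k\<^sup>2 * X + (2 + \<bar>c1\<bar>) * k * Y"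
        unfolding C_def by (simp add: algebra_simps)
      ultimately show ?thesis by linarith
    qed
    have "cmod (ip1k \<Omega> k f q) \<le> C * (k\<^sup>2 * X + k * Y)" using R1 t1 t2 t3 by linarith
    then show ?thesis unfolding f_def q_def X_def Y_def D_def G_def by (simp add: mult.assoc)
  qed
  show ?thesis using part1 part2 unfolding C_def by blast
qed

theorem lemma4p14:
  fixes \<Omega> :: "'a::euclidean_space set"
  assumes dim: "DIM('a) = 2 \<or> DIM('a) = 3"
    and dom: "open \<Omega>" "bounded \<Omega>" "connected \<Omega>" "\<Omega> \<noteq> {}" "lipschitz_domain \<Omega>"
  shows "\<forall>c1 c2. \<exists>C>0. \<forall>(\<T> :: 'a set set) (\<T>0 :: 'a set set) (N :: nat) (Om :: nat \<Rightarrow> 'a set)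
            (k :: real) (\<epsilon> :: real) (\<eta> :: complex) (v :: 'a \<Rightarrow> complex) (Q :: nat \<Rightarrow> 'a \<Rightarrow> complex).
     let Vh = P1_space \<Omega> \<T>;
         V = (\<lambda>l. if l = 0 then P1_space \<Omega> \<T>0 else {w \<in> Vh. supp w \<subseteq> closure (Om l)});
         Dom = (\<lambda>l. if l = 0 then \<Omega> else Om l);
         Gam = (\<lambda>l. if l = 0 then frontier \<Omega> else frontier \<Omega> \<inter> frontier (Om l));
         a = a_eps \<Omega> \<T> k \<epsilon> \<eta>;
         z = helm_z k \<epsilon>;
         R = (\<lambda>l. ip1k \<Omega> k (\<lambda>x. v x - Q l x) (Q l))
     in
     simplicial_mesh \<Omega> \<T> \<longrightarrow>
     simplicial_mesh \<Omega> \<T>0 \<longrightarrow>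
     (\<forall>S0\<in>\<T>0. \<exists>\<A>\<subseteq>\<T>. convex hull S0 = (\<Union>S\<in>\<A>. convex hull S)) \<longrightarrow>
     N \<ge> 1 \<longrightarrow>
     (\<forall>l\<in>{1..N}. \<exists>\<A>\<subseteq>\<T>. \<A> \<noteq> {} \<and> Om l = interior (\<Union>S\<in>\<A>. convex hull S)) \<longrightarrow>
     (\<Union>l\<in>{1..N}. closure (Om l)) = closure \<Omega> \<longrightarrow>
     k > 0 \<longrightarrow> \<epsilon> \<noteq> 0 \<longrightarrow> \<bar>\<epsilon>\<bar> \<le> c1 * k\<^sup>2 \<longrightarrow> cmod \<eta> \<le> c2 * k \<longrightarrow>
     Re (cnj z * \<eta>) \<ge> 0 \<longrightarrow>
     v \<in> Vh \<longrightarrow>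
     (\<forall>l\<le>N. Q l \<in> V l \<and> (\<forall>w\<in>V l. a (Q l) w = a v w)) \<longrightarrow>
     ip1k \<Omega> k v (\<lambda>x. \<Sum>l\<le>N. Q l x) =
        (\<Sum>l\<le>N. complex_of_real ((norm1k \<Omega> k (Q l))\<^sup>2) + R l)
     \<and> (\<forall>l\<le>N. cmod (R l) \<le> C *
          (k\<^sup>2 * L2_norm_on (Dom l) (\<lambda>x. v x - Q l x) * L2_norm_on (Dom l) (Q l)
           + k * bdry_norm_on \<Omega> \<T> (Gam l) (\<lambda>x. v x - Q l x) * bdry_norm_on \<Omega> \<T> (Gam l) (Q l)))"
    apply (intro allI)
  subgoal for c1 c2
    apply (rule exI[of _ "2 + \<bar>c1\<bar> + \<bar>c2\<bar>"])
    apply (intro conjI allI)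
     apply simp
    subgoal for T1 T2 N Om k e eta v Q
      unfolding Let_def
      apply (intro impI)
      subgoal premises p
        by (rule core[OF dim dom(1) dom(2) dom(5) p(1) p(2) p(5) p(7) p(9) p(10) p(12) p(13)])
      done
    done
  done

end
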